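(* Let $\mu$ be a non-zero finite non-negative Borel measure on $\mathbb T$ and $n\in\mathbb N$. Then for every $f\in\mathcal H_{\mu,n}$ and every $j=0,1,\ldots,n$, the integral $\int_{\mathbb D}|f^{(j)}(z)|^2P_\mu(z)(1-|z|^2)^{n-1}dA(z)$ is finite.
   Context: $\mathbb D$ open unit disc, $\mathbb T$ unit circle, $dA$ normalized area measure. $P_\mu(z)=\int_{\mathbb T}\frac{1-|z|^2}{|z-\zeta|^2}d\mu(\zeta)$, $D_{\mu,n}(f)=\frac{1}{n!(n-1)!}\int_{\mathbb D}|f^{(n)}|^2P_\mu(1-|z|^2)^{n-1}dA$, $\mathcal H_{\mu,n}=\{f\in\mathcal O(\mathbb D):D_{\mu,n}(f)<\infty\}$. *)

theory Defs
  imports "HOL-Analysis.Analysis" "HOL-Complex_Analysis.Complex_Analysis"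
begin

definition area_int :: "(complex \<Rightarrow> real) \<Rightarrow> ennreal" where
  "area_int g = (\<integral>\<^sup>+ z. ennreal (g z) * indicator (ball 0 1) z \<partial>lborel) / ennreal pi"

definition poisson_int :: "complex measure \<Rightarrow> complex \<Rightarrow> real" where
  "poisson_int \<mu> z = (\<integral> \<zeta>. (1 - (cmod z)\<^sup>2) / (cmod (z - \<zeta>))\<^sup>2 \<partial>\<mu>)"

definition D_mu :: "complex measure \<Rightarrow> nat \<Rightarrow> (complex \<Rightarrow> complex) \<Rightarrow> ennreal" where
  "D_mu \<mu> n f = ennreal (1 / (fact n * fact (n - 1))) *
     area_int (\<lambda>z. (cmod ((deriv ^^ n) f z))\<^sup>2 * poisson_int \<mu> z * (1 - (cmod z)\<^sup>2) ^ (n - 1))"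

definition H_mu :: "complex measure \<Rightarrow> nat \<Rightarrow> (complex \<Rightarrow> complex) set" where
  "H_mu \<mu> n = {f. f holomorphic_on ball 0 1 \<and> D_mu \<mu> n f < \<infinity>}"

end

theory Submission
  imports Defs
begin

lemma measurable_Complex_pair[measurable]:
  "(\<lambda>p. Complex (fst p) (snd p)) \<in> borel_measurable (lborel \<Otimes>\<^sub>M lborel)"
proof -
  have "(\<lambda>p. Complex (fst p) (snd p)) = (\<lambda>p. complex_of_real (fst p) + \<i> * complex_of_real (snd p))"
    by (auto simp: Complex_eq)
  also have "\<dots> \<in> borel_measurable (lborel \<Otimes>\<^sub>M lborel)" by measurable
  finally show ?thesis .
qed

lemma lborel_complex:
  "(lborel :: complex measure) = distr (lborel \<Otimes>\<^sub>M lborel) borel (\<lambda>p. Complex (fst p) (snd p))"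
proof (rule lborel_eqI)
  fix l u :: complex
  assume le: "\<And>b. b \<in> Basis \<Longrightarrow> l \<bullet> b \<le> u \<bullet> b"
  have le1: "Re l \<le> Re u" and le2: "Im l \<le> Im u"
    using le[of 1] le[of \<i>] by (auto simp: Basis_complex_def)
  have eq: "(\<lambda>p. Complex (fst p) (snd p)) -` box l u \<inter> space (lborel \<Otimes>\<^sub>M lborel)
      = {Re l<..<Re u} \<times> {Im l<..<Im u}"
    by (auto simp: box_def Basis_complex_def space_pair_measure)
  show "emeasure (distr (lborel \<Otimes>\<^sub>M lborel) borel (\<lambda>p. Complex (fst p) (snd p))) (box l u)
        = (\<Prod>b\<in>Basis. (u - l) \<bullet> b)"
    using le1 le2
    by (simp add: emeasure_distr eq lborel.emeasure_pair_measure_Times Basis_complex_def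
          ennreal_mult[symmetric] complex_eq_iff)
qed simp

lemma measurable_Complex_gen[measurable]:
  assumes [measurable]: "g \<in> borel_measurable M" "h \<in> borel_measurable M"
  shows "(\<lambda>x. Complex (g x) (h x)) \<in> borel_measurable M"
proof -
  have "(\<lambda>x. Complex (g x) (h x)) = (\<lambda>x. complex_of_real (g x) + \<i> * complex_of_real (h x))"
    by (auto simp: Complex_eq)
  also have "\<dots> \<in> borel_measurable M" by measurable
  finally show ?thesis .
qed

lemma nn_integral_translate_real:
  fixes g :: "real \<Rightarrow> ennreal"
  assumes [measurable]: "g \<in> borel_measurable borel"
  shows "(\<integral>\<^sup>+x. g (t + x) \<partial>lborel) = (\<integral>\<^sup>+x. g x \<partial>lborel)"
  using nn_integral_real_affine[of g 1 t] by simp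

lemma nn_integral_complex_xy:
  assumes [measurable]: "f \<in> borel_measurable borel"
  shows "(\<integral>\<^sup>+z. f z \<partial>lborel) = (\<integral>\<^sup>+x. \<integral>\<^sup>+y. f (Complex x y) \<partial>lborel \<partial>lborel)"
proof -
  have "(\<integral>\<^sup>+z. f z \<partial>lborel) = (\<integral>\<^sup>+p. f (Complex (fst p) (snd p)) \<partial>(lborel \<Otimes>\<^sub>M lborel))"
    by (subst lborel_complex) (simp add: nn_integral_distr)
  also have "\<dots> = (\<integral>\<^sup>+x. \<integral>\<^sup>+y. f (Complex x y) \<partial>lborel \<partial>lborel)"
    using lborel.nn_integral_fst[of "\<lambda>p. f (Complex (fst p) (snd p))" lborel] by simp
  finally show ?thesis .
qed

lemma nn_integral_complex_yx:
  assumes [measurable]: "f \<in> borel_measurable borel"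
  shows "(\<integral>\<^sup>+z. f z \<partial>lborel) = (\<integral>\<^sup>+y. \<integral>\<^sup>+x. f (Complex x y) \<partial>lborel \<partial>lborel)"
proof -
  have "(\<integral>\<^sup>+z. f z \<partial>lborel) = (\<integral>\<^sup>+x. \<integral>\<^sup>+y. f (Complex x y) \<partial>lborel \<partial>lborel)"
    by (rule nn_integral_complex_xy) simp
  also have "\<dots> = (\<integral>\<^sup>+y. \<integral>\<^sup>+x. f (Complex x y) \<partial>lborel \<partial>lborel)"
    by (rule lborel_pair.Fubini') measurable
  finally show ?thesis .
qed

lemma shear_x_inv:
  assumes [measurable]: "f \<in> borel_measurable borel"
  shows "(\<integral>\<^sup>+z. f (z + complex_of_real (p * Im z)) \<partial>lborel) = (\<integral>\<^sup>+z. f z \<partial>lborel)"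
proof -
  have "(\<integral>\<^sup>+z. f (z + complex_of_real (p * Im z)) \<partial>lborel)
     = (\<integral>\<^sup>+y. \<integral>\<^sup>+x. f (Complex (p * y + x) y) \<partial>lborel \<partial>lborel)"
    by (subst nn_integral_complex_yx) (auto intro!: nn_integral_cong arg_cong[where f=f] simp: complex_eq_iff)
  also have "\<dots> = (\<integral>\<^sup>+y. \<integral>\<^sup>+x. f (Complex x y) \<partial>lborel \<partial>lborel)"
    by (intro nn_integral_cong nn_integral_translate_real) measurable
  also have "\<dots> = (\<integral>\<^sup>+z. f z \<partial>lborel)"
    by (rule nn_integral_complex_yx[symmetric]) simp
  finally show ?thesis .
qed

lemma shear_y_inv:
  assumes [measurable]: "f \<in> borel_measurable borel"
  shows "(\<integral>\<^sup>+z. f (z + \<i> * complex_of_real (b * Re z)) \<partial>lborel) = (\<integral>\<^sup>+z. f z \<partial>lborel)"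
proof -
  have "(\<integral>\<^sup>+z. f (z + \<i> * complex_of_real (b * Re z)) \<partial>lborel)
     = (\<integral>\<^sup>+x. \<integral>\<^sup>+y. f (Complex x (b * x + y)) \<partial>lborel \<partial>lborel)"
    by (subst nn_integral_complex_xy) (auto intro!: nn_integral_cong arg_cong[where f=f] simp: complex_eq_iff)
  also have "\<dots> = (\<integral>\<^sup>+x. \<integral>\<^sup>+y. f (Complex x y) \<partial>lborel \<partial>lborel)"
    by (intro nn_integral_cong nn_integral_translate_real) measurable
  also have "\<dots> = (\<integral>\<^sup>+z. f z \<partial>lborel)"
    by (rule nn_integral_complex_xy[symmetric]) simp
  finally show ?thesis .
qed

lemma rotation_nn_integral:
  fixes \<omega> :: complex
  assumes "norm \<omega> = 1" "Im \<omega> \<noteq> 0" and [measurable]: "f \<in> borel_measurable borel"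
  shows "(\<integral>\<^sup>+z. f (\<omega> * z) \<partial>lborel) = (\<integral>\<^sup>+z. f z \<partial>lborel)"
proof -
  define a b where "a = Re \<omega>" "b = Im \<omega>"
  define p where "p = (a - 1) / b"
  have ab: "a^2 + b^2 = 1" using assms(1) unfolding a_b_def
    by (metis cmod_power2 power_one)
  have b: "b \<noteq> 0" using assms unfolding a_b_def by simp
  define sx where "sx = (\<lambda>z. z + complex_of_real (p * Im z))"
  define sy where "sy = (\<lambda>z. z + \<i> * complex_of_real (b * Re z))"
  have comp: "\<omega> * z = sx (sy (sx z))" for z
  proof -
    have "p * b = a - 1" using b by (simp add: p_def)
    moreover have "p * (a + 1) = - b" using b ab
      by (simp add: p_def field_simps power2_eq_square)
    ultimately have "Re z + p * Im z + p * (Im z + b * (Re z + p * Im z)) = a * Re z - b * Im z"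
      by algebra
    moreover have "Im z + b * (Re z + p * Im z) = b * Re z + a * Im z"
      using \<open>p * b = a - 1\<close> by algebra
    ultimately show ?thesis
      unfolding sx_def sy_def a_b_def
      by (simp add: complex_eq_iff algebra_simps)
  qed
  have [measurable]: "sx \<in> borel_measurable borel" "sy \<in> borel_measurable borel"
    unfolding sx_def sy_def by measurable
  have "(\<integral>\<^sup>+z. f (\<omega> * z) \<partial>lborel) = (\<integral>\<^sup>+z. (\<lambda>w. (\<lambda>v. f (sx v)) (sy w)) (sx z) \<partial>lborel)"
    by (simp add: comp)
  also have "\<dots> = (\<integral>\<^sup>+z. (\<lambda>v. f (sx v)) (sy z) \<partial>lborel)"
    unfolding sx_def by (rule shear_x_inv) (unfold sx_def sy_def, measurable)
  also have "\<dots> = (\<integral>\<^sup>+z. f (sx z) \<partial>lborel)"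
    unfolding sy_def by (rule shear_y_inv) (unfold sx_def, measurable)
  also have "\<dots> = (\<integral>\<^sup>+z. f z \<partial>lborel)"
    unfolding sx_def by (rule shear_x_inv) measurable
  finally show ?thesis .
qed

lemma rotation_distr:
  fixes \<omega> :: complex
  assumes "norm \<omega> = 1" "Im \<omega> \<noteq> 0"
  shows "distr lborel borel (\<lambda>z. \<omega> * z) = lborel"
proof (rule measure_eqI)
  fix A :: "complex set" assume "A \<in> sets (distr lborel borel (\<lambda>z. \<omega> * z))"
  then have A[measurable]: "A \<in> sets borel" by simp
  have "emeasure (distr lborel borel (\<lambda>z. \<omega> * z)) A = (\<integral>\<^sup>+z. indicator A (\<omega> * z) \<partial>lborel)"
  proof -
    have "emeasure (distr lborel borel (\<lambda>z. \<omega> * z)) A = emeasure lborel ((\<lambda>z. \<omega> * z) -` A \<inter> space lborel)"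
      by (rule emeasure_distr) auto
    also have "\<dots> = (\<integral>\<^sup>+z. indicator ((\<lambda>z. \<omega> * z) -` A \<inter> space lborel) z \<partial>lborel)"
      by (rule nn_integral_indicator[symmetric]) (auto intro!: measurable_sets_borel[OF _ A])
    also have "\<dots> = (\<integral>\<^sup>+z. indicator A (\<omega> * z) \<partial>lborel)"
      by (intro nn_integral_cong) (auto split: split_indicator)
    finally show ?thesis .
  qed
  also have "\<dots> = (\<integral>\<^sup>+z. indicator A z \<partial>lborel)"
    using assms by (intro rotation_nn_integral) auto
  also have "\<dots> = emeasure lborel A" using A by simp
  finally show "emeasure (distr lborel borel (\<lambda>z. \<omega> * z)) A = emeasure lborel A" .
qed simp

lemma measurable_cnj[measurable]: "cnj \<in> borel_measurable borel"
  by (rule borel_measurable_continuous_onI) (intro continuous_intros)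

lemma rotation_integral:
  fixes \<omega> :: complex and F :: "complex \<Rightarrow> complex"
  assumes "norm \<omega> = 1" "Im \<omega> \<noteq> 0" and [measurable]: "F \<in> borel_measurable borel"
  shows "(\<integral>z. F (\<omega> * z) \<partial>lborel) = (\<integral>z. F z \<partial>lborel)"
proof -
  have "(\<integral>z. F z \<partial>lborel) = (\<integral>z. F z \<partial>(distr lborel borel (\<lambda>z. \<omega> * z)))"
    using rotation_distr[OF assms(1,2)] by simp
  also have "\<dots> = (\<integral>z. F (\<omega> * z) \<partial>lborel)"
    by (rule integral_distr) auto
  finally show ?thesis ..
qed

lemma orth_radial:
  fixes \<psi> :: "complex \<Rightarrow> complex" and j k :: nat
  assumes jk: "j \<noteq> k" and rad: "\<And>\<omega> z. norm \<omega> = 1 \<Longrightarrow> \<psi> (\<omega> * z) = \<psi> z"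
    and [measurable]: "\<psi> \<in> borel_measurable borel"
  shows "(\<integral>z. z ^ j * cnj z ^ k * \<psi> z \<partial>lborel) = 0"
proof -
  define d where "d = real j - real k"
  have d: "d \<noteq> 0" using jk by (simp add: d_def)
  define \<theta> where "\<theta> = pi / (2 * d)"
  define \<omega> where "\<omega> = cis \<theta>"
  have n\<omega>: "norm \<omega> = 1" by (simp add: \<omega>_def)
  have "sin \<theta> \<noteq> 0"
  proof
    assume "sin \<theta> = 0"
    then obtain n :: int where n: "\<theta> = of_int n * pi" using sin_zero_iff_int2 by blast
    have "\<bar>\<theta>\<bar> \<le> pi / 2"
    proof -
      have "\<bar>d\<bar> \<ge> 1" using jk unfolding d_def by linarith
      then have "\<bar>\<theta>\<bar> = pi / (2 * \<bar>d\<bar>)" by (simp add: \<theta>_def abs_divide abs_mult)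
      also have "\<dots> \<le> pi / 2" using \<open>\<bar>d\<bar> \<ge> 1\<close> by (simp add: divide_le_eq mult_le_cancel_left1)
      finally show ?thesis .
    qed
    moreover have "\<theta> \<noteq> 0" using d by (simp add: \<theta>_def)
    moreover have "n \<noteq> 0" using \<open>\<theta> \<noteq> 0\<close> n by auto
    then have "\<bar>real_of_int n\<bar> \<ge> 1" by linarith
    then have "\<bar>\<theta>\<bar> \<ge> pi" using n pi_gt_zero by (simp add: abs_mult)
    ultimately show False using pi_gt_zero by linarith
  qed
  then have Im\<omega>: "Im \<omega> \<noteq> 0" by (simp add: \<omega>_def)
  define F where "F = (\<lambda>z. z ^ j * cnj z ^ k * \<psi> z)"
  have [measurable]: "F \<in> borel_measurable borel" unfolding F_def by measurable
  have c: "\<omega> ^ j * cnj \<omega> ^ k = \<i>"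
  proof -
    have "\<omega> ^ j * cnj \<omega> ^ k = cis (real j * \<theta>) * cis (- (real k * \<theta>))"
      using Complex.DeMoivre[of \<theta> j] Complex.DeMoivre[of "-\<theta>" k] by (simp add: \<omega>_def cis_cnj)
    also have "\<dots> = cis (d * \<theta>)" by (simp add: cis_mult d_def algebra_simps)
    also have "d * \<theta> = pi / 2" using d by (simp add: \<theta>_def)
    finally show ?thesis by simp
  qed
  have "F (\<omega> * z) = \<i> * F z" for z
    unfolding F_def using rad[OF n\<omega>, of z] c
    by (simp add: power_mult_distrib algebra_simps)
  then have "(\<integral>z. F z \<partial>lborel) = (\<integral>z. \<i> * F z \<partial>lborel)"
    using rotation_integral[OF n\<omega> Im\<omega>, of F] by simp
  also have "\<dots> = \<i> * (\<integral>z. F z \<partial>lborel)" by simp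
  finally show ?thesis unfolding F_def[symmetric]
    by (metis complex_i_not_one mult_cancel_right2 mult.commute)
qed

lemma measure_eqI_lessThan':
  fixes M N :: "real measure"
  assumes sets: "sets M = sets borel" "sets N = sets borel"
  assumes fin: "\<And>x. emeasure M {..<x} < \<infinity>"
  assumes "\<And>x. emeasure M {..<x} = emeasure N {..<x}"
  shows "M = N"
proof (rule measure_eqI_generator_eq_countable)
  let ?LT = "\<lambda>a::real. {..<a}" let ?E = "range ?LT"
  show "Int_stable ?E"
  proof (unfold Int_stable_def, safe)
    fix a b :: real
    have "{..<a} \<inter> {..<b} = {..<min a b}" by auto
    then show "{..<a} \<inter> {..<b} \<in> range lessThan" by blast
  qed
  show "?E \<subseteq> Pow UNIV" "sets M = sigma_sets UNIV ?E" "sets N = sigma_sets UNIV ?E"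
    unfolding sets borel_Iio by auto
  show "?LT`Nats \<subseteq> ?E" "(\<Union>i\<in>Nats. ?LT i) = UNIV" "\<And>a. a \<in> ?LT`Nats \<Longrightarrow> emeasure M a \<noteq> \<infinity>"
  proof -
    show "?LT`Nats \<subseteq> ?E" by auto
    show "(\<Union>i\<in>Nats. ?LT i) = UNIV"
    proof (intro set_eqI iffI)
      fix x :: real
      obtain n :: nat where "x < real n" using reals_Archimedean2 by blast
      then show "x \<in> (\<Union>i\<in>Nats. ?LT i)" by (auto simp: Nats_def)
    qed auto
    show "\<And>a. a \<in> ?LT`Nats \<Longrightarrow> emeasure M a \<noteq> \<infinity>" using fin by (auto simp: less_top)
  qed
qed (auto intro: assms simp: Nats_def image_image)

lemma distr_norm_sq:
  "distr (lborel :: complex measure) borel (\<lambda>z. (cmod z)^2)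
     = density lborel (\<lambda>t. ennreal pi * indicator {0..} t)"
proof (rule measure_eqI_lessThan')
  have pre: "(\<lambda>z. (cmod z)^2) -` {..<a} = ball 0 (sqrt (max a 0))" for a :: real
  proof -
    have "(cmod z)^2 < a \<longleftrightarrow> cmod z < sqrt (max a 0)" for z
    proof -
      have "(cmod z)^2 < a \<longleftrightarrow> (cmod z)^2 < max a 0"
        by (metis max_def not_le zero_le_power2 order.strict_trans2)
      also have "\<dots> \<longleftrightarrow> sqrt ((cmod z)^2) < sqrt (max a 0)"
        by (rule real_sqrt_less_iff[symmetric])
      also have "sqrt ((cmod z)^2) = cmod z" by simp
      finally show ?thesis .
    qed
    then show ?thesis by auto
  qed
  have em1: "emeasure (distr lborel borel (\<lambda>z. (cmod z)^2)) {..<a} = ennreal (pi * max a 0)" for a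
    by (subst emeasure_distr) (simp_all add: pre emeasure_ball unit_ball_vol_2)
  show "emeasure (distr lborel borel (\<lambda>z. (cmod z)^2)) {..<a} < \<infinity>" for a
    by (simp add: em1)
  show "emeasure (distr lborel borel (\<lambda>z. (cmod z)^2)) {..<a} =
        emeasure (density lborel (\<lambda>t. ennreal pi * indicator {0..} t)) {..<a}" for a
  proof -
    have "emeasure (density lborel (\<lambda>t. ennreal pi * indicator {0..} t)) {..<a}
        = (\<integral>\<^sup>+t. ennreal pi * indicator {0..<a} t \<partial>lborel)"
      by (subst emeasure_density) (auto intro!: nn_integral_cong split: split_indicator)
    also have "\<dots> = ennreal pi * emeasure lborel {0..<a}"
      by (rule nn_integral_cmult_indicator) simp
    also have "\<dots> = ennreal (pi * max a 0)"
      by (cases "a \<ge> 0") (simp_all add: ennreal_mult[symmetric])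
    finally show ?thesis by (simp add: em1)
  qed
qed simp_all

lemma radial_nn_integral:
  fixes F :: "real \<Rightarrow> ennreal"
  assumes [measurable]: "F \<in> borel_measurable borel"
  shows "(\<integral>\<^sup>+z. F ((cmod z)^2) \<partial>lborel) = ennreal pi * (\<integral>\<^sup>+t. F t * indicator {0..} t \<partial>lborel)"
proof -
  have "(\<integral>\<^sup>+z. F ((cmod z)^2) \<partial>lborel) = (\<integral>\<^sup>+t. F t \<partial>distr lborel borel (\<lambda>z. (cmod z)^2))"
    by (subst nn_integral_distr) auto
  also have "\<dots> = (\<integral>\<^sup>+t. ennreal pi * indicator {0..} t * F t \<partial>lborel)"
    unfolding distr_norm_sq by (subst nn_integral_density) auto
  also have "\<dots> = ennreal pi * (\<integral>\<^sup>+t. F t * indicator {0..} t \<partial>lborel)"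
    by (subst nn_integral_cmult[symmetric]) (auto intro!: nn_integral_cong simp: mult_ac)
  finally show ?thesis .
qed

definition cmom :: "nat \<Rightarrow> nat \<Rightarrow> real" where
  "cmom s k = fact k * fact s / fact (k + s + 1)"

lemma cmom_pos: "cmom s k > 0"
  by (simp add: cmom_def)

lemma Beta_nat: "Beta (real k + 1) (real s + 1) = cmom s k"
proof -
  have "Beta (real k + 1) (real s + 1) = Gamma (1 + real k) * Gamma (1 + real s) / Gamma (1 + real (k + s + 1))"
    unfolding Beta_def by (simp add: add_ac)
  also have "\<dots> = fact k * fact s / fact (k + s + 1)"
    by (simp only: Gamma_fact)
  finally show ?thesis by (simp add: cmom_def)
qed

lemma has_integral_moment:
  "((\<lambda>t. t ^ k * (1 - t) ^ s) has_integral cmom s k) {0..1::real}"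
proof -
  have "((\<lambda>t. t powr (real k + 1 - 1) * (1 - t) powr (real s + 1 - 1)) has_integral Beta (real k + 1) (real s + 1)) {0..1}"
    by (rule has_integral_Beta_real) auto
  then have *: "((\<lambda>t. t powr (real k) * (1 - t) powr (real s)) has_integral cmom s k) {0..1}"
    by (simp add: Beta_nat)
  show ?thesis
  proof (rule has_integral_spike_finite[OF _ _ *])
    show "finite {0::real, 1}" by simp
    fix t :: real assume "t \<in> {0..1} - {0, 1}"
    then have "0 < t" "0 < 1 - t" by auto
    then show "t ^ k * (1 - t) ^ s = t powr real k * (1 - t) powr real s"
      by (simp add: powr_realpow)
  qed
qed

lemma disc_moment:
  assumes s: "s \<ge> 1"
  shows "(\<integral>\<^sup>+z. ennreal ((cmod z)^(2*k) * (1 - (cmod z)^2)^s) * indicator (ball 0 1) z \<partial>lborel)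
       = ennreal (pi * cmom s k)"
proof -
  define F where "F = (\<lambda>t::real. ennreal (t^k * (1-t)^s) * indicator {..<1} t)"
  have [measurable]: "F \<in> borel_measurable borel" unfolding F_def by measurable
  have "(\<integral>\<^sup>+z. ennreal ((cmod z)^(2*k) * (1 - (cmod z)^2)^s) * indicator (ball 0 1) z \<partial>lborel)
      = (\<integral>\<^sup>+z. F ((cmod z)^2) \<partial>lborel)"
  proof (intro nn_integral_cong)
    fix z :: complex
    have "z \<in> ball 0 1 \<longleftrightarrow> (cmod z)^2 < 1"
      by (simp add: abs_square_less_1)
    then show "ennreal ((cmod z)^(2*k) * (1 - (cmod z)^2)^s) * indicator (ball 0 1) z = F ((cmod z)^2)"
      unfolding F_def by (simp add: power_mult indicator_def)
  qed
  also have "\<dots> = ennreal pi * (\<integral>\<^sup>+t. F t * indicator {0..} t \<partial>lborel)"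
    by (rule radial_nn_integral) simp
  also have "(\<integral>\<^sup>+t. F t * indicator {0..} t \<partial>lborel) = (\<integral>\<^sup>+t. ennreal (t^k * (1-t)^s) * indicator {0..1} t \<partial>lborel)"
    using s by (intro nn_integral_cong) (auto simp: F_def indicator_def)
  also have "\<dots> = ennreal (cmom s k)"
    by (rule nn_integral_has_integral_lebesgue'[OF _ has_integral_moment]) simp
  finally show ?thesis using cmom_pos[of s k] by (simp add: ennreal_mult[symmetric])
qed

definition wr :: "nat \<Rightarrow> real \<Rightarrow> complex \<Rightarrow> real" where
  "wr s r z = (1 - (cmod z)^2)^s * indicator (cball 0 r) z"

lemma cball_borel[measurable]: "cball (c::'a::euclidean_space) r \<in> sets borel"
  by (simp add: borel_closed)

lemma wr_measurable[measurable]: "wr s r \<in> borel_measurable borel"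
  unfolding wr_def by measurable

lemma wr_rot: "norm \<omega> = 1 \<Longrightarrow> wr s r (\<omega> * z) = wr s r z"
  by (simp add: wr_def norm_mult indicator_def)

lemma integrable_wr_cont:
  assumes "continuous_on (cball 0 r) F"
  shows "integrable lborel (\<lambda>z. F z * complex_of_real (wr s r z))"
proof -
  have "integrable lborel (\<lambda>z. indicator (cball 0 r) z *\<^sub>R (F z * complex_of_real ((1 - (cmod z)^2)^s)))"
    by (rule borel_integrable_compact) (auto intro!: continuous_intros assms)
  moreover have "(\<lambda>z. indicator (cball 0 r) z *\<^sub>R (F z * complex_of_real ((1 - (cmod z)^2)^s)))
    = (\<lambda>z. F z * complex_of_real (wr s r z))"
    by (auto simp: fun_eq_iff wr_def indicator_def)
  ultimately show ?thesis by simp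
qed

lemma integrable_wr_cont_real:
  assumes "continuous_on (cball 0 r) F"
  shows "integrable lborel (\<lambda>z. F z * wr s r z)"
proof -
  have "integrable lborel (\<lambda>z. indicator (cball 0 r) z *\<^sub>R (F z * ((1 - (cmod z)^2)^s)))"
    by (rule borel_integrable_compact) (auto intro!: continuous_intros assms)
  moreover have "(\<lambda>z. indicator (cball 0 r) z *\<^sub>R (F z * ((1 - (cmod z)^2)^s)))
    = (\<lambda>z. F z * wr s r z)"
    by (auto simp: fun_eq_iff wr_def indicator_def)
  ultimately show ?thesis by simp
qed

lemma integral_double_sum:
  fixes F :: "'i \<Rightarrow> 'j \<Rightarrow> 'a \<Rightarrow> 'b::{banach,second_countable_topology}"
  assumes "\<And>j k. integrable M (F j k)"
  shows "(\<integral>x. (\<Sum>j\<in>A. \<Sum>k\<in>B. F j k x) \<partial>M) = (\<Sum>j\<in>A. \<Sum>k\<in>B. \<integral>x. F j k x \<partial>M)"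
  using assms by (simp add: integrable_sum)

lemma finite_parseval:
  fixes a :: "nat \<Rightarrow> complex"
  shows "(\<integral>z. (cmod (\<Sum>k<N. a k * z^k))^2 * wr s r z \<partial>lborel)
       = (\<Sum>k<N. (cmod (a k))^2 * (\<integral>z. (cmod z)^(2*k) * wr s r z \<partial>lborel))"
proof -
  define I where "I = (\<lambda>j k. \<integral>z. z ^ j * cnj z ^ k * complex_of_real (wr s r z) \<partial>lborel)"
  have intg: "integrable lborel (\<lambda>z. z ^ j * cnj z ^ k * complex_of_real (wr s r z))" for j k
    by (rule integrable_wr_cont) (intro continuous_intros)
  have off: "j \<noteq> k \<Longrightarrow> I j k = 0" for j k
    unfolding I_def by (rule orth_radial) (auto simp: wr_rot)
  have diag: "I k k = complex_of_real (\<integral>z. (cmod z)^(2*k) * wr s r z \<partial>lborel)" for k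
  proof -
    have "z ^ k * cnj z ^ k * complex_of_real (wr s r z) = complex_of_real ((cmod z)^(2*k) * wr s r z)" for z
    proof -
      have "z ^ k * cnj z ^ k = (z * cnj z) ^ k" by (simp add: power_mult_distrib)
      also have "\<dots> = complex_of_real ((cmod z)^(2*k))"
        by (simp add: complex_norm_square[symmetric] power_mult)
      finally show ?thesis by simp
    qed
    then have "(\<lambda>z. z ^ k * cnj z ^ k * complex_of_real (wr s r z)) = (\<lambda>z. complex_of_real ((cmod z)^(2*k) * wr s r z))"
      by (intro ext)
    then show ?thesis unfolding I_def by (simp only: integral_complex_of_real)
  qed
  have sq: "complex_of_real ((cmod (\<Sum>k<N. a k * z^k))^2 * wr s r z)
      = (\<Sum>j<N. \<Sum>k<N. (a j * cnj (a k)) * (z ^ j * cnj z ^ k * complex_of_real (wr s r z)))" for z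
  proof -
    have "complex_of_real ((cmod (\<Sum>k<N. a k * z^k))^2) = (\<Sum>j<N. a j * z^j) * cnj (\<Sum>k<N. a k * z^k)"
      by (rule complex_norm_square)
    also have "\<dots> = (\<Sum>j<N. \<Sum>k<N. (a j * cnj (a k)) * (z ^ j * cnj z ^ k))"
      by (simp add: sum_distrib_left sum_distrib_right mult_ac) (rule sum.swap)
    finally have "complex_of_real ((cmod (\<Sum>k<N. a k * z^k))^2) = (\<Sum>j<N. \<Sum>k<N. (a j * cnj (a k)) * (z ^ j * cnj z ^ k))" .
    then have "complex_of_real ((cmod (\<Sum>k<N. a k * z^k))^2 * wr s r z) = (\<Sum>j<N. \<Sum>k<N. (a j * cnj (a k)) * (z ^ j * cnj z ^ k)) * complex_of_real (wr s r z)"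
      by (simp only: of_real_mult)
    then show ?thesis
      by (simp only: sum_distrib_right mult.assoc)
  qed
  have "complex_of_real (\<integral>z. (cmod (\<Sum>k<N. a k * z^k))^2 * wr s r z \<partial>lborel)
      = (\<integral>z. (\<Sum>j<N. \<Sum>k<N. (a j * cnj (a k)) * (z ^ j * cnj z ^ k * complex_of_real (wr s r z))) \<partial>lborel)"
    by (simp only: integral_complex_of_real[symmetric] sq)
  also have "\<dots> = (\<Sum>j<N. \<Sum>k<N. \<integral>z. (a j * cnj (a k)) * (z ^ j * cnj z ^ k * complex_of_real (wr s r z)) \<partial>lborel)"
    by (rule integral_double_sum[where F="\<lambda>j k z. (a j * cnj (a k)) * (z ^ j * cnj z ^ k * complex_of_real (wr s r z))"])
       (intro integrable_mult_right intg)
  also have "\<dots> = (\<Sum>j<N. \<Sum>k<N. (a j * cnj (a k)) * I j k)"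
    unfolding I_def by simp
  also have "\<dots> = (\<Sum>j<N. (a j * cnj (a j)) * I j j)"
  proof (rule sum.cong[OF refl])
    fix j assume "j \<in> {..<N}"
    then show "(\<Sum>k<N. (a j * cnj (a k)) * I j k) = (a j * cnj (a j)) * I j j"
      by (subst sum.remove[of _ j]) (auto simp: off intro!: sum.neutral)
  qed
  also have "\<dots> = complex_of_real (\<Sum>k<N. (cmod (a k))^2 * (\<integral>z. (cmod z)^(2*k) * wr s r z \<partial>lborel))"
    by (simp add: diag complex_norm_square[symmetric])
  finally show ?thesis using of_real_eq_iff by blast
qed

lemma wr_nonneg: "r < 1 \<Longrightarrow> wr s r z \<ge> 0"
proof -
  assume r: "r < 1"
  show ?thesis
  proof (cases "z \<in> cball 0 r")
    case True
    then have "cmod z < 1" using r by simp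
    then have "(cmod z)^2 \<le> 1" by (simp add: abs_square_le_1 less_imp_le)
    then show ?thesis by (simp add: wr_def)
  qed (simp add: wr_def)
qed

lemma wr_le1: "r < 1 \<Longrightarrow> wr s r z \<le> indicator (cball 0 r) z"
proof -
  assume r: "r < 1"
  show ?thesis
  proof (cases "z \<in> cball 0 r")
    case True
    then have "cmod z < 1" using r by simp
    then have "(cmod z)^2 \<le> 1" by (simp add: abs_square_le_1 less_imp_le)
    then have "(1 - (cmod z)^2)^s \<le> 1" by (intro power_le_one) auto
    then show ?thesis using True by (simp add: wr_def)
  qed (simp add: wr_def)
qed

lemma trunc_parseval:
  fixes h :: "complex \<Rightarrow> complex" and a :: "nat \<Rightarrow> complex"
  assumes ser: "\<And>z. z \<in> ball 0 1 \<Longrightarrow> (\<lambda>k. a k * z^k) sums h z"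
    and r: "0 \<le> r" "r < 1"
  shows "(\<lambda>k. (cmod (a k))^2 * (\<integral>z. (cmod z)^(2*k) * wr s r z \<partial>lborel)) sums (\<integral>z. (cmod (h z))^2 * wr s r z \<partial>lborel)"
    and "integrable lborel (\<lambda>z. (cmod (h z))^2 * wr s r z)"
    and "(\<lambda>z. (cmod (h z))^2 * wr s r z) \<in> borel_measurable borel"
proof -
  define \<rho> where "\<rho> = (1 + r) / 2"
  have \<rho>: "r < \<rho>" "\<rho> < 1" using r by (auto simp: \<rho>_def)
  have "summable (\<lambda>k. a k * complex_of_real \<rho> ^ k)"
    using ser[of "complex_of_real \<rho>"] \<rho> r by (auto simp: sums_iff)
  then have summ: "summable (\<lambda>k. norm (a k * complex_of_real r ^ k))"
    by (rule powser_insidea) (use \<rho> r in auto)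
  define K where "K = (\<Sum>k. norm (a k * complex_of_real r ^ k))"
  define u where "u = (\<lambda>N z. (\<Sum>k<N. a k * z^k))"
  define S where "S = (\<lambda>N z. (cmod (u N z))^2 * wr s r z)"
  define L where "L = (\<lambda>z. (cmod (h z))^2 * wr s r z)"
  have S_meas[measurable]: "S N \<in> borel_measurable borel" for N
    unfolding S_def u_def by measurable
  have lim: "(\<lambda>N. S N z) \<longlonglongrightarrow> L z" for z
  proof (cases "z \<in> cball 0 r")
    case True
    then have "z \<in> ball 0 1" using r by auto
    then have "(\<lambda>N. u N z) \<longlonglongrightarrow> h z" using ser[of z] by (simp add: sums_def u_def)
    then show ?thesis unfolding S_def L_def by (intro tendsto_intros)
  next
    case False
    then show ?thesis by (simp add: S_def L_def wr_def)
  qed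
  have L_meas[measurable]: "L \<in> borel_measurable borel"
    by (rule borel_measurable_LIMSEQ_real[OF lim S_meas])
  then show "(\<lambda>z. (cmod (h z))^2 * wr s r z) \<in> borel_measurable borel" by (simp add: L_def)
  have uK: "cmod (u N z) \<le> K" if "z \<in> cball 0 r" for N z
  proof -
    have "cmod (u N z) \<le> (\<Sum>k<N. norm (a k * z^k))"
      unfolding u_def by (rule norm_sum)
    also have "\<dots> \<le> (\<Sum>k<N. norm (a k * complex_of_real r ^ k))"
      using that r by (intro sum_mono) (auto simp: norm_mult norm_power intro!: mult_left_mono power_mono)
    also have "\<dots> \<le> K" unfolding K_def
      by (rule sum_le_suminf[OF summ]) auto
    finally show ?thesis .
  qed
  have bound: "norm (S N z) \<le> K^2 * indicator (cball 0 r) z" for N z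
  proof (cases "z \<in> cball 0 r")
    case True
    have "norm (S N z) = (cmod (u N z))^2 * wr s r z"
      unfolding S_def using wr_nonneg[OF r(2)] by simp
    also have "\<dots> \<le> K^2 * 1"
      using wr_le1[OF r(2), of s z] True wr_nonneg[OF r(2), of s z] uK[OF True, of N]
      by (intro mult_mono power_mono) auto
    finally show ?thesis using True by simp
  next
    case False
    then show ?thesis by (simp add: S_def wr_def)
  qed
  have intK: "integrable lborel (\<lambda>z::complex. K^2 * indicator (cball 0 r) z :: real)"
  proof -
    have "emeasure lborel (cball (0::complex) r) < \<infinity>" by (rule emeasure_bounded_finite) simp
    then show ?thesis by (intro integrable_mult_right integrable_real_indicator) auto
  qed
  have conv: "(\<lambda>N. \<integral>z. S N z \<partial>lborel) \<longlonglongrightarrow> (\<integral>z. L z \<partial>lborel)"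
    and intL: "integrable lborel L"
  proof -
    have a1: "L \<in> borel_measurable lborel" "\<And>N. S N \<in> borel_measurable lborel" by auto
    have a2: "AE z in lborel. (\<lambda>N. S N z) \<longlonglongrightarrow> L z" by (intro AE_I2 lim)
    have a3: "\<And>N. AE z in lborel. norm (S N z) \<le> K^2 * indicator (cball 0 r) z" by (intro AE_I2 bound)
    show "(\<lambda>N. \<integral>z. S N z \<partial>lborel) \<longlonglongrightarrow> (\<integral>z. L z \<partial>lborel)"
      by (rule integral_dominated_convergence[OF a1 intK a2 a3])
    show "integrable lborel L"
      by (rule integrable_dominated_convergence[OF a1 intK a2 a3])
  qed
  then show "integrable lborel (\<lambda>z. (cmod (h z))^2 * wr s r z)" by (simp add: L_def)
  have "(\<integral>z. S N z \<partial>lborel) = (\<Sum>k<N. (cmod (a k))^2 * (\<integral>z. (cmod z)^(2*k) * wr s r z \<partial>lborel))" for N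
    unfolding S_def u_def by (rule finite_parseval)
  with conv show "(\<lambda>k. (cmod (a k))^2 * (\<integral>z. (cmod z)^(2*k) * wr s r z \<partial>lborel)) sums (\<integral>z. (cmod (h z))^2 * wr s r z \<partial>lborel)"
    by (simp add: sums_def L_def)
qed

definition rr :: "nat \<Rightarrow> real" where "rr n = 1 - 1 / (real n + 2)"

lemma rr_bounds: "0 \<le> rr n" "rr n < 1"
  by (auto simp: rr_def field_simps)

lemma rr_mono: "n \<le> m \<Longrightarrow> rr n \<le> rr m"
  by (auto simp: rr_def field_simps)

lemma rr_exists: "cmod z < 1 \<Longrightarrow> \<exists>n. cmod z \<le> rr n"
proof -
  assume z: "cmod z < 1"
  obtain n :: nat where n: "1 / (1 - cmod z) < real n" using reals_Archimedean2 by blast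
  have "1 / (real n + 2) \<le> 1 - cmod z"
  proof -
    have "0 < 1 - cmod z" using z by simp
    then have "1 < real n * (1 - cmod z)" using n by (simp add: field_simps)
    then have "1 \<le> (real n + 2) * (1 - cmod z)" using z by (simp add: algebra_simps)
    then show ?thesis by (simp add: field_simps)
  qed
  then have "cmod z \<le> rr n" by (simp add: rr_def)
  then show ?thesis by blast
qed

lemma wr_rr_mono:
  assumes "n \<le> m" "G z \<ge> 0"
  shows "G z * wr s (rr n) z \<le> G z * wr s (rr m) z"
proof (cases "z \<in> cball 0 (rr n)")
  case True
  then have "z \<in> cball 0 (rr m)" using rr_mono[OF assms(1)] by auto
  with True show ?thesis by (simp add: wr_def)
next
  case False
  then show ?thesis using assms(2) wr_nonneg[OF rr_bounds(2), of s m z]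
    by (simp add: wr_def)
qed

lemma sup_trunc:
  fixes G :: "complex \<Rightarrow> real"
  assumes G: "\<And>z. G z \<ge> 0" and meas: "\<And>n. (\<lambda>z. G z * wr s (rr n) z) \<in> borel_measurable borel"
  shows "(\<integral>\<^sup>+z. ennreal (G z * (1 - (cmod z)^2)^s) * indicator (ball 0 1) z \<partial>lborel)
       = (SUP n. \<integral>\<^sup>+z. ennreal (G z * wr s (rr n) z) \<partial>lborel)"
proof -
  define f where "f = (\<lambda>n z. ennreal (G z * wr s (rr n) z))"
  have inc: "incseq f"
    by (auto simp: incseq_def f_def le_fun_def intro!: ennreal_leI wr_rr_mono G)
  have fm[measurable]: "f n \<in> borel_measurable borel" for n
    unfolding f_def using meas[of n] by measurable
  have pt: "(SUP n. f n z) = ennreal (G z * (1 - (cmod z)^2)^s) * indicator (ball 0 1) z" for z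
  proof (cases "z \<in> ball 0 1")
    case True
    then obtain n0 where n0: "cmod z \<le> rr n0" using rr_exists by auto
    have le: "f n z \<le> ennreal (G z * (1 - (cmod z)^2)^s)" for n
    proof (cases "z \<in> cball 0 (rr n)")
      case True then show ?thesis by (simp add: f_def wr_def)
    next
      case False then show ?thesis by (simp add: f_def wr_def)
    qed
    have eq: "f n0 z = ennreal (G z * (1 - (cmod z)^2)^s)"
      using n0 by (simp add: f_def wr_def)
    have "(SUP n. f n z) \<le> ennreal (G z * (1 - (cmod z)^2)^s)"
      by (rule SUP_least) (rule le)
    moreover have "ennreal (G z * (1 - (cmod z)^2)^s) \<le> (SUP n. f n z)"
      unfolding eq[symmetric] by (rule SUP_upper) simp
    ultimately show ?thesis using True by simp
  next
    case False
    then have "z \<notin> cball 0 (rr n)" for n using rr_bounds(2)[of n] by auto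
    then show ?thesis using False by (simp add: f_def wr_def)
  qed
  have "(\<integral>\<^sup>+z. ennreal (G z * (1 - (cmod z)^2)^s) * indicator (ball 0 1) z \<partial>lborel)
      = (\<integral>\<^sup>+z. (SUP n. f n z) \<partial>lborel)" by (simp add: pt)
  also have "\<dots> = (SUP n. integral\<^sup>N lborel (f n))"
    by (rule nn_integral_monotone_convergence_SUP[OF inc]) simp
  finally show ?thesis by (simp add: f_def)
qed

lemma parseval_disc:
  fixes h :: "complex \<Rightarrow> complex" and a :: "nat \<Rightarrow> complex"
  assumes ser: "\<And>z. z \<in> ball 0 1 \<Longrightarrow> (\<lambda>k. a k * z^k) sums h z"
  shows "(\<integral>\<^sup>+z. ennreal ((cmod (h z))^2 * (1 - (cmod z)^2)^s) * indicator (ball 0 1) z \<partial>lborel)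
    = (\<Sum>k. ennreal ((cmod (a k))^2) *
         (\<integral>\<^sup>+z. ennreal ((cmod z)^(2*k) * (1 - (cmod z)^2)^s) * indicator (ball 0 1) z \<partial>lborel))"
proof -
  define E where "E = (\<lambda>k n. \<integral>\<^sup>+z. ennreal ((cmod z)^(2*k) * wr s (rr n) z) \<partial>lborel)"
  have Eint: "E k n = ennreal (\<integral>z. (cmod z)^(2*k) * wr s (rr n) z \<partial>lborel)" for k n
    unfolding E_def
    by (rule nn_integral_eq_integral[OF integrable_wr_cont_real])
       (auto intro!: continuous_intros AE_I2 mult_nonneg_nonneg wr_nonneg rr_bounds)
  have step: "(\<integral>\<^sup>+z. ennreal ((cmod (h z))^2 * wr s (rr n) z) \<partial>lborel)
      = (\<Sum>k. ennreal ((cmod (a k))^2) * E k n)" for n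
  proof -
    note tp = trunc_parseval[OF ser rr_bounds(1) rr_bounds(2), of s n]
    have "(\<integral>\<^sup>+z. ennreal ((cmod (h z))^2 * wr s (rr n) z) \<partial>lborel)
        = ennreal (\<integral>z. (cmod (h z))^2 * wr s (rr n) z \<partial>lborel)"
      by (rule nn_integral_eq_integral[OF tp(2)]) (auto intro!: AE_I2 mult_nonneg_nonneg wr_nonneg rr_bounds)
    also have "(\<integral>z. (cmod (h z))^2 * wr s (rr n) z \<partial>lborel)
        = (\<Sum>k. (cmod (a k))^2 * (\<integral>z. (cmod z)^(2*k) * wr s (rr n) z \<partial>lborel))"
      using tp(1) by (simp add: sums_iff)
    also have "ennreal \<dots> = (\<Sum>k. ennreal ((cmod (a k))^2 * (\<integral>z. (cmod z)^(2*k) * wr s (rr n) z \<partial>lborel)))"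
      using tp(1)
      by (intro suminf_ennreal2[symmetric])
         (auto simp: sums_iff intro!: mult_nonneg_nonneg integral_nonneg_AE AE_I2 wr_nonneg rr_bounds)
    also have "\<dots> = (\<Sum>k. ennreal ((cmod (a k))^2) * E k n)"
      by (intro suminf_cong) (simp add: Eint ennreal_mult'[symmetric])
    finally show ?thesis .
  qed
  have hm: "(\<lambda>z. (cmod (h z))^2 * wr s (rr n) z) \<in> borel_measurable borel" for n
    using trunc_parseval(3)[OF ser rr_bounds(1) rr_bounds(2)] .
  have Einc: "incseq (E k)" for k
    unfolding E_def incseq_def
    by (auto intro!: nn_integral_mono ennreal_leI wr_rr_mono)
  have Esup: "(SUP n. E k n) = (\<integral>\<^sup>+z. ennreal ((cmod z)^(2*k) * (1 - (cmod z)^2)^s) * indicator (ball 0 1) z \<partial>lborel)" for k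
    unfolding E_def by (rule sup_trunc[symmetric]) auto
  have "(\<integral>\<^sup>+z. ennreal ((cmod (h z))^2 * (1 - (cmod z)^2)^s) * indicator (ball 0 1) z \<partial>lborel)
      = (SUP n. \<integral>\<^sup>+z. ennreal ((cmod (h z))^2 * wr s (rr n) z) \<partial>lborel)"
    by (rule sup_trunc) (auto intro: hm)
  also have "\<dots> = (SUP n. \<Sum>k. ennreal ((cmod (a k))^2) * E k n)"
    by (simp add: step)
  also have "\<dots> = (\<Sum>k. SUP n. ennreal ((cmod (a k))^2) * E k n)"
    by (rule ennreal_suminf_SUP_eq[symmetric]) (auto intro!: mult_left_mono simp: incseq_def dest: Einc[THEN incseqD])
  also have "\<dots> = (\<Sum>k. ennreal ((cmod (a k))^2) * (SUP n. E k n))"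
    by (simp add: SUP_mult_left_ennreal)
  finally show ?thesis by (simp add: Esup)
qed

definition gt :: "nat \<Rightarrow> nat \<Rightarrow> real" where
  "gt s j = fact (s - 1) * fact j / fact (j + s)"

lemma cmom_tele_aux:
  fixes X Y F :: real and k t :: nat
  assumes "F > 0"
  shows "X * ((real t + 1) * Y) / ((real k + real t + 2) * F)
       = Y * X / F - Y * ((real k + 1) * X) / ((real k + real t + 2) * F)"
proof -
  define P where "P = real k + real t + 2"
  have p: "P \<noteq> 0" by (simp add: P_def)
  have "Y * X / F = (P * (Y * X)) / (P * F)" using p by simp
  then have "Y * X / F - Y * ((real k + 1) * X) / (P * F) = (P * (Y * X) - Y * ((real k + 1) * X)) / (P * F)"
    by (simp add: diff_divide_distrib)
  also have "P * (Y * X) - Y * ((real k + 1) * X) = X * ((real t + 1) * Y)"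
    unfolding P_def by (simp add: algebra_simps)
  finally show ?thesis unfolding P_def by simp
qed

lemma cmom_tele:
  assumes "s \<ge> 1"
  shows "cmom s k = gt s k - gt s (Suc k)"
proof -
  obtain t where s: "s = Suc t" using assms by (cases s) auto
  define F where "F = (fact (k + t + 1) :: real)"
  have F: "F > 0" by (simp add: F_def)
  have f1: "fact (k + Suc t + 1) = (real k + real t + 2) * F"
    unfolding F_def by (simp add: algebra_simps)
  have f2: "fact (Suc k + Suc t) = (real k + real t + 2) * F"
    unfolding F_def by (simp add: algebra_simps)
  have f3: "fact (k + Suc t) = F" unfolding F_def by (simp add: algebra_simps)
  have f4: "fact (Suc k) = (real k + 1) * (fact k :: real)" by (simp add: algebra_simps)
  have f5: "fact (Suc t) = (real t + 1) * (fact t :: real)" by (simp add: algebra_simps)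
  have "cmom s k = fact k * ((real t + 1) * fact t) / ((real k + real t + 2) * F)"
    unfolding cmom_def s by (simp only: f1 f5)
  also have "\<dots> = fact t * fact k / F - fact t * ((real k + 1) * fact k) / ((real k + real t + 2) * F)"
    by (rule cmom_tele_aux[OF F])
  also have "\<dots> = gt s k - gt s (Suc k)"
    unfolding gt_def s by (simp only: f2 f3 f4 diff_Suc_1)
  finally show ?thesis .
qed

lemma gt_nonneg: "gt s j \<ge> 0"
  by (simp add: gt_def)

lemma gt_bound:
  assumes "s \<ge> 1"
  shows "gt s j \<le> fact (s - 1) / (real j + 1)"
proof -
  have "fact (j + 1) \<le> (fact (j + s) :: real)"
    using assms by (intro fact_mono) auto
  then have "(real j + 1) * fact j \<le> (fact (j + s) :: real)" by (simp add: algebra_simps)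
  moreover have "(fact (j + s) :: real) > 0" by simp
  ultimately have "fact j / fact (j + s) \<le> 1 / (real j + 1)"
    by (simp add: field_simps)
  then have "fact (s - 1) * (fact j / fact (j + s)) \<le> fact (s - 1) * (1 / (real j + 1))"
    by (intro mult_left_mono) auto
  then show ?thesis unfolding gt_def by simp
qed

lemma gt_tendsto:
  assumes "s \<ge> 1"
  shows "(\<lambda>k. gt s (k + j)) \<longlonglongrightarrow> 0"
proof (rule Lim_null_comparison)
  show "\<forall>\<^sub>F k in sequentially. norm (gt s (k + j)) \<le> fact (s - 1) * inverse (real (Suc k))"
  proof (intro always_eventually allI)
    fix k
    have "gt s (k + j) \<le> fact (s - 1) / (real (k + j) + 1)" by (rule gt_bound[OF assms])
    also have "\<dots> = fact (s - 1) * inverse (real (k + j) + 1)" by (simp add: divide_inverse)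
    also have "\<dots> \<le> fact (s - 1) * inverse (real (Suc k))"
      by (intro mult_left_mono le_imp_inverse_le) auto
    finally show "norm (gt s (k + j)) \<le> fact (s - 1) * inverse (real (Suc k))" using gt_nonneg[of s "k+j"] by simp
  qed
  show "(\<lambda>k. fact (s - 1) * inverse (real (Suc k))) \<longlonglongrightarrow> 0"
    by (rule tendsto_mult_right_zero[OF LIMSEQ_inverse_real_of_nat])
qed

lemma cmom_tail:
  assumes "s \<ge> 1"
  shows "(\<lambda>k. cmom s (k + j)) sums gt s j"
proof -
  have "(\<lambda>k. gt s (k + j) - gt s (Suc k + j)) sums (gt s (0 + j) - 0)"
    by (rule telescope_sums'[OF gt_tendsto[OF assms]])
  then show ?thesis using cmom_tele[OF assms] by simp
qed

lemma cmom_total: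
  assumes "s \<ge> 1"
  shows "(\<lambda>k. cmom s k) sums (1 / real s)"
proof -
  have "gt s 0 = 1 / real s"
    using assms by (cases s) (auto simp: gt_def)
  then show ?thesis using cmom_tail[OF assms, of 0] by simp
qed

lemma cmom_tail2:
  assumes "s \<ge> 1"
  shows "(\<lambda>m. if i < m then cmom s (m + 1) else 0) sums gt s (i + 2)"
proof -
  have "(\<lambda>k. (\<lambda>m. if i < m then cmom s (m + 1) else 0) (k + (i + 1))) sums gt s (i + 2)"
    using cmom_tail[OF assms, of "i + 2"] by (simp add: add_ac)
  then have "(\<lambda>m. if i < m then cmom s (m + 1) else 0) sums (gt s (i + 2) + (\<Sum>m<i+1. (if i < m then cmom s (m + 1) else 0)))"
    by (rule sums_iff_shift[THEN iffD1])
  moreover have "(\<Sum>m<i+1. (if i < m then cmom s (m + 1) else 0)) = 0"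
    by (intro sum.neutral) auto
  ultimately show ?thesis by simp
qed

lemma cmom_wtail:
  assumes "s \<ge> 1"
  shows "gt s (i + 2) / (real (i + 1) * real (i + 2)) \<le> cmom s i"
proof -
  obtain t where s: "s = Suc t" using assms by (cases s) auto
  define Q where "Q = real (i + 1) * real (i + 2)"
  have Q: "Q > 0" by (simp add: Q_def)
  have e1: "fact (i + 2) = Q * (fact i :: real)"
    unfolding Q_def by (simp add: numeral_2_eq_2 algebra_simps)
  have "gt s (i + 2) / Q = fact t * (Q * fact i) / fact (i + 2 + Suc t) / Q"
    unfolding gt_def s by (simp only: e1 diff_Suc_1)
  also have "\<dots> = fact t * fact i / fact (i + 2 + Suc t)"
  proof -
    have "\<And>a b W. a * (Q * b) / W / Q = a * b / (W::real)" using Q by simp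
    then show ?thesis by blast
  qed
  finally have lhs: "gt s (i + 2) / Q = fact t * fact i / fact (i + 2 + Suc t)" .
  have "fact (i + t + 2) \<le> (fact (i + 2 + Suc t) :: real)" by (intro fact_mono) auto
  moreover have "fact t \<le> (fact (Suc t) :: real)" by (intro fact_mono) auto
  ultimately have "fact t * fact i / fact (i + 2 + Suc t) \<le> fact (Suc t) * fact i / (fact (i + t + 2) :: real)"
    by (intro frac_le mult_right_mono) auto
  also have "\<dots> = cmom s i" unfolding cmom_def s by (simp add: add_ac mult_ac)
  finally show ?thesis using lhs by (simp add: Q_def)
qed

definition Ds :: "(nat \<Rightarrow> complex) \<Rightarrow> nat \<Rightarrow> complex" where
  "Ds \<alpha> m = (\<Sum>i\<le>m. of_nat (i+1) * \<alpha> (i+1))"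

definition As :: "(nat \<Rightarrow> complex) \<Rightarrow> nat \<Rightarrow> complex" where
  "As \<alpha> m = (\<Sum>i\<le>m. \<alpha> i)"

definition wt :: "nat \<Rightarrow> real" where
  "wt i = 1 / (real (i+1) * real (i+2))"

lemma wt_nonneg: "wt i \<ge> 0" by (simp add: wt_def)

lemma abel_aux:
  fixes P D a :: complex
  assumes "P \<noteq> 0" "P + 1 \<noteq> 0"
  shows "(D + (P + 1) * a) / (P + 1) + D / (P * (P + 1)) = D / P + a"
proof -
  have 1: "(D + (P + 1) * a) / (P + 1) = D / (P + 1) + a"
    using assms by (simp add: add_divide_distrib)
  have 2: "D / (P + 1) + D / (P * (P + 1)) = D / P"
  proof -
    have "D / (P + 1) = (D * P) / (P * (P + 1))" using assms by simp
    then have "D / (P + 1) + D / (P * (P + 1)) = (D * P + D) / (P * (P + 1))"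
      by (simp add: add_divide_distrib)
    also have "D * P + D = D * (P + 1)" by (simp add: algebra_simps)
    also have "D * (P + 1) / (P * (P + 1)) = D / P" using assms by simp
    finally show ?thesis .
  qed
  show ?thesis using 1 2 by (simp add: add_ac)
qed

lemma abel_identity:
  "(\<Sum>i\<le>m. \<alpha> (i+1)) = Ds \<alpha> m / of_nat (m+1) + (\<Sum>i<m. Ds \<alpha> i / (of_nat (i+1) * of_nat (i+2)))"
proof (induction m)
  case 0
  then show ?case by (simp add: Ds_def)
next
  case (Suc m)
  have D: "Ds \<alpha> (Suc m) = Ds \<alpha> m + of_nat (m+2) * \<alpha> (m+2)"
    by (simp add: Ds_def add_ac)
  have nz1: "(of_nat (m+1) :: complex) \<noteq> 0" using of_nat_neq_0[of m, where 'a=complex] by simp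
  have nz2: "(of_nat (m+2) :: complex) \<noteq> 0" using of_nat_neq_0[of "Suc m", where 'a=complex] by simp
  have key: "Ds \<alpha> m / of_nat (m+1) + \<alpha> (m+2)
      = Ds \<alpha> (Suc m) / of_nat (Suc m + 1) + Ds \<alpha> m / (of_nat (m+1) * of_nat (m+2))"
  proof -
    have e: "of_nat (Suc m + 1) = (of_nat (m+2) :: complex)" by simp
    have "Ds \<alpha> (Suc m) / of_nat (Suc m + 1) + Ds \<alpha> m / (of_nat (m+1) * of_nat (m+2))
        = (Ds \<alpha> m + of_nat (m+2) * \<alpha> (m+2)) / of_nat (m+2) + Ds \<alpha> m / (of_nat (m+1) * of_nat (m+2))"
      by (simp only: D e)
    also have "\<dots> = Ds \<alpha> m / of_nat (m+1) + \<alpha> (m+2)"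
    proof -
      have e2: "of_nat (m+2) = (of_nat (m+1) :: complex) + 1" by simp
      have nz2': "(of_nat (m+1) :: complex) + 1 \<noteq> 0" using nz2 e2 by simp
      show ?thesis unfolding e2 by (rule abel_aux[OF nz1 nz2'])
    qed
    finally show ?thesis by simp
  qed
  have "(\<Sum>i\<le>Suc m. \<alpha> (i+1)) = (\<Sum>i\<le>m. \<alpha> (i+1)) + \<alpha> (m+2)" by simp
  also have "\<dots> = Ds \<alpha> m / of_nat (m+1) + \<alpha> (m+2) + (\<Sum>i<m. Ds \<alpha> i / (of_nat (i+1) * of_nat (i+2)))"
    using Suc.IH by simp
  also have "\<dots> = Ds \<alpha> (Suc m) / of_nat (Suc m + 1) + (\<Sum>i<Suc m. Ds \<alpha> i / (of_nat (i+1) * of_nat (i+2)))"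
    unfolding key sum.lessThan_Suc by (simp only: add_ac)
  finally show ?case .
qed

lemma wt_tele: "wt n = 1 / real (n+1) - 1 / real (Suc n + 1)"
proof -
  have "1 / real (n+1) - 1 / real (Suc n + 1) = (1 * real (Suc n + 1) - 1 * real (n+1)) / (real (n+1) * real (Suc n + 1))"
    by (rule diff_frac_eq) auto
  also have "\<dots> = wt n" by (simp add: wt_def)
  finally show ?thesis ..
qed

lemma sum_wt_le1: "(\<Sum>i<m. wt i) \<le> 1"
proof -
  have "(\<Sum>i<m. wt i) = (\<Sum>i<m. (- 1 / real (Suc i + 1)) - (- 1 / real (i + 1)))"
    by (intro sum.cong refl) (simp add: wt_tele)
  also have "\<dots> = - 1 / real (m + 1) - (- 1 / real (0 + 1))"
    by (rule sum_lessThan_telescope[where f="\<lambda>i. - 1 / real (i + 1)"])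
  finally show ?thesis by simp
qed

lemma three_sq: "((x::real) + y + z)^2 \<le> 3 * (x^2 + y^2 + z^2)"
proof -
  have "0 \<le> (x - y)^2 + (y - z)^2 + (x - z)^2" by simp
  then show ?thesis by (simp add: power2_eq_square algebra_simps)
qed

lemma cs_wt:
  fixes x :: "nat \<Rightarrow> real"
  shows "(\<Sum>i<m. wt i * x i)^2 \<le> (\<Sum>i<m. wt i * (x i)^2)"
proof -
  have "(\<Sum>i<m. wt i * x i)^2 = (\<Sum>i<m. sqrt (wt i) * (sqrt (wt i) * x i))^2"
    using wt_nonneg by (simp add: mult.assoc[symmetric])
  also have "\<dots> \<le> (\<Sum>i<m. (sqrt (wt i))^2) * (\<Sum>i<m. (sqrt (wt i) * x i)^2)"
    by (rule Cauchy_Schwarz_ineq_sum)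
  also have "\<dots> = (\<Sum>i<m. wt i) * (\<Sum>i<m. wt i * (x i)^2)"
    using wt_nonneg by (simp add: power_mult_distrib)
  also have "\<dots> \<le> 1 * (\<Sum>i<m. wt i * (x i)^2)"
    by (intro mult_right_mono sum_wt_le1 sum_nonneg mult_nonneg_nonneg wt_nonneg) auto
  finally show ?thesis by simp
qed

lemma As_bound:
  "(cmod (As \<alpha> (Suc m)))^2 \<le> 3 * (cmod (\<alpha> 0))^2 + 3 * ((cmod (Ds \<alpha> m))^2 / (real (m+1))^2)
     + 3 * (\<Sum>i<m. wt i * (cmod (Ds \<alpha> i))^2)"
proof -
  have "As \<alpha> (Suc m) = \<alpha> 0 + (\<Sum>i\<le>m. \<alpha> (i+1))"
    unfolding As_def by (subst sum.atMost_Suc_shift) simp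
  also have "\<dots> = \<alpha> 0 + Ds \<alpha> m / of_nat (m+1) + (\<Sum>i<m. Ds \<alpha> i / (of_nat (i+1) * of_nat (i+2)))"
    by (simp only: abel_identity add.assoc)
  finally have eq: "As \<alpha> (Suc m) = \<alpha> 0 + Ds \<alpha> m / of_nat (m+1) + (\<Sum>i<m. Ds \<alpha> i / (of_nat (i+1) * of_nat (i+2)))" .
  have n3: "cmod (\<Sum>i<m. Ds \<alpha> i / (of_nat (i+1) * of_nat (i+2))) \<le> (\<Sum>i<m. wt i * cmod (Ds \<alpha> i))"
  proof -
    have "cmod (\<Sum>i<m. Ds \<alpha> i / (of_nat (i+1) * of_nat (i+2))) \<le> (\<Sum>i<m. cmod (Ds \<alpha> i / (of_nat (i+1) * of_nat (i+2))))"
      by (rule norm_sum)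
    also have "\<dots> = (\<Sum>i<m. wt i * cmod (Ds \<alpha> i))"
    proof (intro sum.cong refl)
      fix i
      have "cmod (of_nat (i+1) * of_nat (i+2) :: complex) = real (i+1) * real (i+2)"
        by (simp only: norm_mult norm_of_nat)
      then show "cmod (Ds \<alpha> i / (of_nat (i+1) * of_nat (i+2))) = wt i * cmod (Ds \<alpha> i)"
        by (simp only: norm_divide wt_def) simp
    qed
    finally show ?thesis .
  qed
  have n2: "cmod (Ds \<alpha> m / of_nat (m+1)) = cmod (Ds \<alpha> m) / real (m+1)"
    by (simp only: norm_divide norm_of_nat)
  define x where "x = cmod (\<alpha> 0)"
  define y where "y = cmod (Ds \<alpha> m) / real (m+1)"
  define z where "z = (\<Sum>i<m. wt i * cmod (Ds \<alpha> i))"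
  have "cmod (As \<alpha> (Suc m)) \<le> x + y + z"
    unfolding eq x_def y_def z_def using n3 n2 norm_triangle_le
    by (smt (verit, best) norm_triangle_ineq)
  then have "(cmod (As \<alpha> (Suc m)))^2 \<le> (x + y + z)^2"
    by (intro power_mono) auto
  also have "\<dots> \<le> 3 * (x^2 + y^2 + z^2)" by (rule three_sq)
  also have "z^2 \<le> (\<Sum>i<m. wt i * (cmod (Ds \<alpha> i))^2)"
    unfolding z_def by (rule cs_wt)
  finally show ?thesis unfolding x_def y_def by (simp add: power_divide algebra_simps)
qed

lemma ennreal_suminf_head: "(\<Sum>n. f n :: ennreal) = f 0 + (\<Sum>n. f (Suc n))"
proof -
  have "(\<lambda>n. f (Suc n)) sums (\<Sum>n. f (Suc n))" by (rule summable_sums) simp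
  then have "f sums ((\<Sum>n. f (Suc n)) + f 0)" by (rule sums_Suc)
  then show ?thesis by (simp add: sums_unique[symmetric] add.commute)
qed

lemma ennreal_sum_swap: "(\<Sum>m. \<Sum>i. F m i :: ennreal) = (\<Sum>i. \<Sum>m. F m i)"
proof -
  have "(\<Sum>m. \<Sum>i. F m i) = (\<Sum>m. \<integral>\<^sup>+i. F m i \<partial>count_space UNIV)"
    by (simp add: nn_integral_count_space_nat)
  also have "\<dots> = (\<integral>\<^sup>+i. (\<Sum>m. F m i) \<partial>count_space UNIV)"
    by (rule nn_integral_suminf[symmetric]) simp
  also have "\<dots> = (\<Sum>i. \<Sum>m. F m i)"
    by (simp add: nn_integral_count_space_nat)
  finally show ?thesis .
qed

lemma ennreal_suminf_le: "(\<And>n. f n \<le> g n) \<Longrightarrow> (\<Sum>n. f n :: ennreal) \<le> (\<Sum>n. g n)"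
  by (rule suminf_le) auto

lemma ennreal_finite_sum_as_suminf:
  "(\<Sum>i<m. F i :: ennreal) = (\<Sum>i. if i < m then F i else 0)"
proof -
  have "(\<lambda>i. if i \<in> {..<m} then F i else 0) sums (\<Sum>i\<in>{..<m}. F i)"
    by (rule sums_If_finite_set) simp
  then show ?thesis by (simp add: sums_unique)
qed

lemma cmom_dec: "cmom s (Suc m) \<le> cmom s m"
proof -
  define A where "A = (fact m :: real)"
  define B where "B = (fact (m + s + 1) :: real)"
  have A: "A > 0" and B: "B > 0" by (simp_all add: A_def B_def)
  have e1: "fact (Suc m) = (real m + 1) * A" by (simp add: A_def algebra_simps)
  have e2: "fact (Suc m + s + 1) = (real m + real s + 2) * B"
    by (simp add: B_def algebra_simps)
  have "cmom s (Suc m) = ((real m + 1) * A) * fact s / ((real m + real s + 2) * B)"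
    unfolding cmom_def by (simp only: e1 e2)
  also have "\<dots> = ((real m + 1) / (real m + real s + 2)) * (A * fact s / B)"
    by (simp add: field_simps)
  also have "\<dots> \<le> 1 * (A * fact s / B)"
    using A B by (intro mult_right_mono) (auto simp: divide_le_eq)
  also have "\<dots> = cmom s m" by (simp add: cmom_def A_def B_def)
  finally show ?thesis .
qed

lemma discrete_main:
  fixes \<alpha> :: "nat \<Rightarrow> complex"
  assumes s: "s \<ge> 1"
  shows "(\<Sum>k. ennreal ((cmod (As \<alpha> k))^2 * cmom s k))
     \<le> 6 * (ennreal ((cmod (\<alpha> 0))^2) + (\<Sum>k. ennreal ((cmod (Ds \<alpha> k))^2 * cmom s k)))"
proof -
  define a0 where "a0 = (cmod (\<alpha> 0))^2"
  define d where "d = (\<lambda>k. (cmod (Ds \<alpha> k))^2)"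
  define c where "c = cmom s"
  have c_nn: "c k \<ge> 0" for k using cmom_pos[of s k] by (simp add: c_def)
  have d_nn: "d k \<ge> 0" for k by (simp add: d_def)
  have a0_nn: "a0 \<ge> 0" by (simp add: a0_def)
  have c_dec: "c (Suc m) \<le> c m" for m
    unfolding c_def by (rule cmom_dec)
  have ctot: "(\<Sum>k. ennreal (c k)) \<le> 1"
  proof -
    have "(\<Sum>k. ennreal (c k)) = ennreal (1 / real s)"
      using cmom_total[OF s] c_nn by (intro suminf_ennreal_eq) (auto simp: c_def)
    also have "\<dots> \<le> 1" using s by (simp add: ennreal_le_1)
    finally show ?thesis .
  qed
  have pw: "ennreal ((cmod (As \<alpha> (Suc m)))^2 * c (Suc m))
      \<le> 3 * (ennreal a0 * ennreal (c (Suc m))) + 3 * ennreal (d m * c m)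
         + 3 * (\<Sum>i. if i < m then ennreal (wt i * d i * c (Suc m)) else 0)" for m
  proof -
    have b: "(cmod (As \<alpha> (Suc m)))^2 \<le> 3 * a0 + 3 * (d m / (real (m+1))^2) + 3 * (\<Sum>i<m. wt i * d i)"
      using As_bound[of \<alpha> m] by (simp add: a0_def d_def)
    have "(cmod (As \<alpha> (Suc m)))^2 * c (Suc m) \<le> (3 * a0 + 3 * (d m / (real (m+1))^2) + 3 * (\<Sum>i<m. wt i * d i)) * c (Suc m)"
      by (rule mult_right_mono[OF b c_nn])
    also have "\<dots> = 3 * (a0 * c (Suc m)) + 3 * (d m / (real (m+1))^2 * c (Suc m)) + 3 * (\<Sum>i<m. wt i * d i * c (Suc m))"
      by (simp only: distrib_right mult.assoc sum_distrib_right)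
    also have "d m / (real (m+1))^2 * c (Suc m) \<le> d m * c m"
    proof -
      have q: "(1::real) \<le> (real (m+1))^2" using one_le_power[of "real (m+1)" 2] by simp
      then have "d m \<le> d m * (real (m+1))^2" using d_nn[of m] by (simp add: mult_le_cancel_left1)
      then have "d m / (real (m+1))^2 \<le> d m" using q by (simp add: divide_le_eq)
      then show ?thesis using c_dec[of m] c_nn d_nn[of m] by (intro mult_mono) auto
    qed
    finally have r: "(cmod (As \<alpha> (Suc m)))^2 * c (Suc m) \<le> 3 * (a0 * c (Suc m)) + 3 * (d m * c m) + 3 * (\<Sum>i<m. wt i * d i * c (Suc m))"
      by simp
    have nn: "0 \<le> (\<Sum>i<m. wt i * d i * c (Suc m))" "0 \<le> a0 * c (Suc m)" "0 \<le> d m * c m"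
      using wt_nonneg d_nn c_nn a0_nn by (auto intro!: sum_nonneg mult_nonneg_nonneg)
    have "ennreal ((cmod (As \<alpha> (Suc m)))^2 * c (Suc m)) \<le> ennreal (3 * (a0 * c (Suc m)) + 3 * (d m * c m) + 3 * (\<Sum>i<m. wt i * d i * c (Suc m)))"
      by (rule ennreal_leI[OF r])
    also have "\<dots> = 3 * (ennreal a0 * ennreal (c (Suc m))) + 3 * ennreal (d m * c m) + 3 * (\<Sum>i<m. ennreal (wt i * d i * c (Suc m)))"
    proof -
      have e3: "ennreal (3 * X + 3 * Y + 3 * Z) = 3 * ennreal X + 3 * ennreal Y + 3 * ennreal Z"
        if "0 \<le> X" "0 \<le> Y" "0 \<le> Z" for X Y Z :: real
        using that by (simp add: ennreal_plus ennreal_mult)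
      have e4: "ennreal (a0 * c (Suc m)) = ennreal a0 * ennreal (c (Suc m))"
        using a0_nn c_nn by (simp add: ennreal_mult)
      have e5: "ennreal (\<Sum>i<m. wt i * d i * c (Suc m)) = (\<Sum>i<m. ennreal (wt i * d i * c (Suc m)))"
        using wt_nonneg d_nn c_nn by (intro sum_ennreal[symmetric] mult_nonneg_nonneg) auto
      show ?thesis using e3[OF nn(2) nn(3) nn(1)] e4 e5 by simp
    qed
    also have "(\<Sum>i<m. ennreal (wt i * d i * c (Suc m))) = (\<Sum>i. if i < m then ennreal (wt i * d i * c (Suc m)) else 0)"
      by (rule ennreal_finite_sum_as_suminf)
    finally show ?thesis .
  qed
  have dbl: "(\<Sum>m. \<Sum>i. if i < m then ennreal (wt i * d i * c (Suc m)) else 0) \<le> (\<Sum>i. ennreal (d i * c i))"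
  proof -
    have "(\<Sum>m. \<Sum>i. if i < m then ennreal (wt i * d i * c (Suc m)) else 0)
        = (\<Sum>i. \<Sum>m. if i < m then ennreal (wt i * d i * c (Suc m)) else 0)"
      by (rule ennreal_sum_swap)
    also have "\<dots> \<le> (\<Sum>i. ennreal (d i * c i))"
    proof (rule ennreal_suminf_le)
      fix i
      have "(\<Sum>m. if i < m then ennreal (wt i * d i * c (Suc m)) else 0)
          = (\<Sum>m. ennreal (wt i * d i) * ennreal (if i < m then c (Suc m) else 0))"
        using wt_nonneg[of i] d_nn[of i] c_nn
        by (intro suminf_cong) (auto simp: ennreal_mult[symmetric])
      also have "\<dots> = ennreal (wt i * d i) * (\<Sum>m. ennreal (if i < m then c (Suc m) else 0))"
        by simp
      also have "(\<Sum>m. ennreal (if i < m then c (Suc m) else 0)) = ennreal (gt s (i + 2))"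
      proof -
        have eqf: "(\<lambda>m. if i < m then c (Suc m) else 0) = (\<lambda>m. if i < m then cmom s (m + 1) else 0)"
          unfolding c_def by (rule ext) simp
        have "(\<lambda>m. if i < m then c (Suc m) else 0) sums gt s (i + 2)"
          unfolding eqf by (rule cmom_tail2[OF s])
        then show ?thesis using c_nn by (intro suminf_ennreal_eq) auto
      qed
      also have "ennreal (wt i * d i) * ennreal (gt s (i + 2)) = ennreal (d i * (gt s (i + 2) / (real (i + 1) * real (i + 2))))"
        using wt_nonneg[of i] d_nn[of i] gt_nonneg[of s "i+2"]
        by (simp add: ennreal_mult[symmetric] wt_def mult_ac)
      also have "\<dots> \<le> ennreal (d i * c i)"
        using cmom_wtail[OF s, of i] d_nn[of i] by (intro ennreal_leI mult_left_mono) (auto simp: c_def)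
      finally show "(\<Sum>m. if i < m then ennreal (wt i * d i * c (Suc m)) else 0) \<le> ennreal (d i * c i)" .
    qed
    finally show ?thesis .
  qed
  have As0: "As \<alpha> 0 = \<alpha> 0" by (simp add: As_def)
  have "(\<Sum>k. ennreal ((cmod (As \<alpha> k))^2 * c k))
      = ennreal (a0 * c 0) + (\<Sum>m. ennreal ((cmod (As \<alpha> (Suc m)))^2 * c (Suc m)))"
    by (subst ennreal_suminf_head) (simp add: As0 a0_def)
  also have "(\<Sum>m. ennreal ((cmod (As \<alpha> (Suc m)))^2 * c (Suc m)))
      \<le> (\<Sum>m. 3 * (ennreal a0 * ennreal (c (Suc m))) + 3 * ennreal (d m * c m)
         + 3 * (\<Sum>i. if i < m then ennreal (wt i * d i * c (Suc m)) else 0))"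
    by (rule ennreal_suminf_le[OF pw])
  also have "\<dots> = 3 * ennreal a0 * (\<Sum>m. ennreal (c (Suc m))) + 3 * (\<Sum>m. ennreal (d m * c m))
         + 3 * (\<Sum>m. \<Sum>i. if i < m then ennreal (wt i * d i * c (Suc m)) else 0)"
  proof -
    define A where "A = (\<lambda>m. 3 * (ennreal a0 * ennreal (c (Suc m))))"
    define B where "B = (\<lambda>m. 3 * ennreal (d m * c m))"
    define C where "C = (\<lambda>m. 3 * (\<Sum>i. if i < m then ennreal (wt i * d i * c (Suc m)) else 0))"
    have "(\<Sum>m. A m + B m + C m) = (\<Sum>m. A m + B m) + (\<Sum>m. C m)"
      by (rule suminf_add[symmetric]) auto
    also have "(\<Sum>m. A m + B m) = (\<Sum>m. A m) + (\<Sum>m. B m)"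
      by (rule suminf_add[symmetric]) auto
    also have "(\<Sum>m. A m) = 3 * ennreal a0 * (\<Sum>m. ennreal (c (Suc m)))"
      unfolding A_def by (simp only: ennreal_suminf_cmult mult.assoc)
    also have "(\<Sum>m. B m) = 3 * (\<Sum>m. ennreal (d m * c m))"
      unfolding B_def by (rule ennreal_suminf_cmult)
    also have "(\<Sum>m. C m) = 3 * (\<Sum>m. \<Sum>i. if i < m then ennreal (wt i * d i * c (Suc m)) else 0)"
      unfolding C_def by (rule ennreal_suminf_cmult)
    finally show ?thesis unfolding A_def B_def C_def .
  qed
  finally have st: "(\<Sum>k. ennreal ((cmod (As \<alpha> k))^2 * c k)) \<le>
      ennreal (a0 * c 0) + (3 * ennreal a0 * (\<Sum>m. ennreal (c (Suc m))) + 3 * (\<Sum>m. ennreal (d m * c m))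
         + 3 * (\<Sum>m. \<Sum>i. if i < m then ennreal (wt i * d i * c (Suc m)) else 0))"
    by (simp add: add_mono)
  have p1: "ennreal (a0 * c 0) + 3 * ennreal a0 * (\<Sum>m. ennreal (c (Suc m))) \<le> 3 * ennreal a0"
  proof -
    have "ennreal (a0 * c 0) + 3 * ennreal a0 * (\<Sum>m. ennreal (c (Suc m)))
        \<le> 3 * ennreal a0 * ennreal (c 0) + 3 * ennreal a0 * (\<Sum>m. ennreal (c (Suc m)))"
    proof (rule add_mono[OF _ order_refl])
      have t: "ennreal a0 \<le> 3 * ennreal a0"
        using mult_right_mono[of "1::ennreal" 3 "ennreal a0"] by simp
      have "ennreal (a0 * c 0) = ennreal a0 * ennreal (c 0)" using a0_nn c_nn by (simp add: ennreal_mult)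
      also have "\<dots> \<le> 3 * ennreal a0 * ennreal (c 0)" by (rule mult_right_mono[OF t]) simp
      finally show "ennreal (a0 * c 0) \<le> 3 * ennreal a0 * ennreal (c 0)" .
    qed
    also have "\<dots> = 3 * ennreal a0 * (\<Sum>k. ennreal (c k))"
      by (subst (2) ennreal_suminf_head) (simp add: distrib_left)
    also have "\<dots> \<le> 3 * ennreal a0 * 1"
      by (intro mult_left_mono ctot) auto
    finally show ?thesis by simp
  qed
  have "(\<Sum>k. ennreal ((cmod (As \<alpha> k))^2 * c k)) \<le>
      3 * ennreal a0 + 3 * (\<Sum>m. ennreal (d m * c m)) + 3 * (\<Sum>i. ennreal (d i * c i))"
  proof -
    have "ennreal (a0 * c 0) + (3 * ennreal a0 * (\<Sum>m. ennreal (c (Suc m))) + 3 * (\<Sum>m. ennreal (d m * c m))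
         + 3 * (\<Sum>m. \<Sum>i. if i < m then ennreal (wt i * d i * c (Suc m)) else 0))
       = (ennreal (a0 * c 0) + 3 * ennreal a0 * (\<Sum>m. ennreal (c (Suc m)))) + 3 * (\<Sum>m. ennreal (d m * c m))
         + 3 * (\<Sum>m. \<Sum>i. if i < m then ennreal (wt i * d i * c (Suc m)) else 0)"
      by (simp add: add_ac)
    also have "\<dots> \<le> 3 * ennreal a0 + 3 * (\<Sum>m. ennreal (d m * c m)) + 3 * (\<Sum>i. ennreal (d i * c i))"
      by (intro add_mono p1 order_refl mult_left_mono dbl) auto
    finally show ?thesis using st by (rule order_trans[rotated])
  qed
  also have "\<dots> \<le> 6 * (ennreal a0 + (\<Sum>k. ennreal (d k * c k)))"
  proof -
    have "3 * ennreal a0 + 3 * (\<Sum>m. ennreal (d m * c m)) + 3 * (\<Sum>i. ennreal (d i * c i))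
        = 3 * ennreal a0 + 6 * (\<Sum>k. ennreal (d k * c k))"
    proof -
      have "(3::ennreal) * X + 3 * X = 6 * X" for X
        by (simp add: distrib_right[symmetric])
      then show ?thesis by (simp only: add.assoc)
    qed
    also have "\<dots> \<le> 6 * ennreal a0 + 6 * (\<Sum>k. ennreal (d k * c k))"
      by (intro add_mono mult_right_mono order_refl) auto
    finally show ?thesis by (simp add: distrib_left)
  qed
  finally show ?thesis by (simp add: a0_def d_def c_def)
qed

lemma abs_summable_inside:
  fixes e :: "nat \<Rightarrow> complex"
  assumes ser: "\<And>z. z \<in> ball 0 1 \<Longrightarrow> (\<lambda>k. e k * z^k) sums F z"
    and z: "z \<in> ball 0 1"
  shows "summable (\<lambda>k. norm (e k * z^k))"
proof -
  define \<rho> where "\<rho> = (1 + cmod z) / 2"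
  have \<rho>: "cmod z < \<rho>" "\<rho> < 1" "0 < \<rho>" using z by (auto simp: \<rho>_def add_pos_nonneg)
  have "summable (\<lambda>k. e k * complex_of_real \<rho> ^ k)"
    using ser[of "complex_of_real \<rho>"] \<rho> z by (auto simp: sums_iff)
  then show ?thesis
    by (rule powser_insidea) (use \<rho> in auto)
qed

lemma cauchy_div:
  fixes e :: "nat \<Rightarrow> complex"
  assumes ser: "\<And>z. z \<in> ball 0 1 \<Longrightarrow> (\<lambda>k. e k * z^k) sums F z"
    and \<zeta>: "cmod \<zeta> = 1" and z: "z \<in> ball 0 1"
  shows "(\<lambda>k. (\<Sum>i\<le>k. e i * cnj \<zeta> ^ (k - i + 1)) * z^k) sums (F z / (\<zeta> - z))"
proof -
  have zn: "cmod (cnj \<zeta> * z) < 1" using \<zeta> z by (simp add: norm_mult)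
  have geo: "(\<lambda>k. (cnj \<zeta> * z)^k) sums (1 / (1 - cnj \<zeta> * z))"
    by (rule geometric_sums[OF zn])
  have sa: "summable (\<lambda>k. norm (e k * z^k))" by (rule abs_summable_inside[OF ser z])
  have sb: "summable (\<lambda>k. norm (cnj \<zeta> * (cnj \<zeta> * z)^k))"
    using summable_geometric[of "norm (cnj \<zeta> * z)"] zn \<zeta>
    by (simp add: norm_mult norm_power)
  have "(\<lambda>k. \<Sum>i\<le>k. (e i * z^i) * (cnj \<zeta> * (cnj \<zeta> * z)^(k - i))) sums
      ((\<Sum>k. e k * z^k) * (\<Sum>k. cnj \<zeta> * (cnj \<zeta> * z)^k))"
    by (rule Cauchy_product_sums[OF sa sb])
  moreover have "(\<Sum>k. e k * z^k) = F z" using ser[OF z] by (simp add: sums_iff)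
  moreover have "(\<Sum>k. cnj \<zeta> * (cnj \<zeta> * z)^k) = 1 / (\<zeta> - z)"
  proof -
    have "(\<Sum>k. cnj \<zeta> * (cnj \<zeta> * z)^k) = cnj \<zeta> * (1 / (1 - cnj \<zeta> * z))"
      using sums_mult[OF geo, of "cnj \<zeta>"] by (simp add: sums_iff)
    also have "\<dots> = 1 / (\<zeta> - z)"
    proof -
      have cz: "cnj \<zeta> * \<zeta> = 1" using \<zeta> by (metis complex_norm_square mult.commute of_real_1 power_one)
      have "\<zeta> \<noteq> 0" using \<zeta> by auto
      have "\<zeta> - z \<noteq> 0" using \<zeta> z by auto
      have e: "1 - cnj \<zeta> * z = cnj \<zeta> * (\<zeta> - z)" using cz by (simp add: algebra_simps)
      have cnz: "cnj \<zeta> \<noteq> 0" using \<open>\<zeta> \<noteq> 0\<close> by simp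
      have "cnj \<zeta> * (1 / (1 - cnj \<zeta> * z)) = cnj \<zeta> / (cnj \<zeta> * (\<zeta> - z))" by (simp add: e)
      also have "\<dots> = 1 / (\<zeta> - z)" using cnz by simp
      finally show ?thesis .
    qed
    finally show ?thesis .
  qed
  moreover have "(\<Sum>i\<le>k. (e i * z^i) * (cnj \<zeta> * (cnj \<zeta> * z)^(k - i))) = (\<Sum>i\<le>k. e i * cnj \<zeta> ^ (k - i + 1)) * z^k" for k
  proof -
    have "(e i * z^i) * (cnj \<zeta> * (cnj \<zeta> * z)^(k - i)) = (e i * cnj \<zeta> ^ (k - i + 1)) * z^k" if "i \<le> k" for i
    proof -
      have zz: "z^i * z^(k-i) = z^k" using that by (simp add: power_add[symmetric])
      have "(e i * z^i) * (cnj \<zeta> * (cnj \<zeta> * z)^(k - i)) = (e i * cnj \<zeta> ^ (k - i + 1)) * (z^i * z^(k-i))"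
        by (simp add: power_mult_distrib mult_ac)
      then show ?thesis by (simp only: zz)
    qed
    then have "(\<Sum>i\<le>k. (e i * z^i) * (cnj \<zeta> * (cnj \<zeta> * z)^(k - i))) = (\<Sum>i\<le>k. (e i * cnj \<zeta> ^ (k - i + 1)) * z^k)"
      by (intro sum.cong) auto
    then show ?thesis by (simp add: sum_distrib_right)
  qed
  ultimately show ?thesis by (simp add: divide_inverse)
qed

lemma cnj_shift_norm:
  fixes e :: "nat \<Rightarrow> complex"
  assumes \<zeta>: "cmod \<zeta> = 1"
  shows "cmod (\<Sum>i\<le>k. e i * cnj \<zeta> ^ (k - i + 1)) = cmod (\<Sum>i\<le>k. e i * \<zeta> ^ i)"
proof -
  have cz: "cnj \<zeta> * \<zeta> = 1" using \<zeta> by (metis complex_norm_square mult.commute of_real_1 power_one)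
  have "e i * cnj \<zeta> ^ (k - i + 1) = cnj \<zeta> ^ (k + 1) * (e i * \<zeta> ^ i)" if "i \<le> k" for i
  proof -
    have ki: "k + 1 = (k - i + 1) + i" using that by simp
    have "cnj \<zeta> ^ (k + 1) = cnj \<zeta> ^ (k - i + 1) * cnj \<zeta> ^ i"
      by (subst ki) (rule power_add)
    moreover have "cnj \<zeta> ^ i * \<zeta> ^ i = 1" using cz by (simp add: power_mult_distrib[symmetric])
    ultimately have h1: "cnj \<zeta> ^ (k + 1) = cnj \<zeta> ^ (k - i + 1) * cnj \<zeta> ^ i"
      and h2: "cnj \<zeta> ^ i * \<zeta> ^ i = 1" by auto
    have "cnj \<zeta> ^ (k + 1) * (e i * \<zeta> ^ i) = (cnj \<zeta> ^ (k - i + 1) * cnj \<zeta> ^ i) * (e i * \<zeta> ^ i)"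
      by (simp only: h1)
    also have "\<dots> = (e i * cnj \<zeta> ^ (k - i + 1)) * (cnj \<zeta> ^ i * \<zeta> ^ i)"
      by (simp add: mult_ac)
    also have "\<dots> = e i * cnj \<zeta> ^ (k - i + 1)" by (simp only: h2 mult_1_right)
    finally show ?thesis by (rule sym)
  qed
  then have "(\<Sum>i\<le>k. e i * cnj \<zeta> ^ (k - i + 1)) = (\<Sum>i\<le>k. cnj \<zeta> ^ (k + 1) * (e i * \<zeta> ^ i))"
    by (intro sum.cong) auto
  also have "\<dots> = cnj \<zeta> ^ (k + 1) * (\<Sum>i\<le>k. e i * \<zeta> ^ i)"
    by (rule sum_distrib_left[symmetric])
  finally have "(\<Sum>i\<le>k. e i * cnj \<zeta> ^ (k - i + 1)) = cnj \<zeta> ^ (k + 1) * (\<Sum>i\<le>k. e i * \<zeta> ^ i)" .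
  then show ?thesis using \<zeta> by (simp add: norm_mult norm_power)
qed

lemma disc_series_moment:
  fixes h :: "complex \<Rightarrow> complex" and a :: "nat \<Rightarrow> complex"
  assumes ser: "\<And>z. z \<in> ball 0 1 \<Longrightarrow> (\<lambda>k. a k * z^k) sums h z" and s: "s \<ge> 1"
  shows "(\<integral>\<^sup>+z. ennreal ((cmod (h z))^2 * (1 - (cmod z)^2)^s) * indicator (ball 0 1) z \<partial>lborel)
    = ennreal pi * (\<Sum>k. ennreal ((cmod (a k))^2 * cmom s k))"
proof -
  have "(\<integral>\<^sup>+z. ennreal ((cmod (h z))^2 * (1 - (cmod z)^2)^s) * indicator (ball 0 1) z \<partial>lborel)
    = (\<Sum>k. ennreal ((cmod (a k))^2) * ennreal (pi * cmom s k))"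
    by (simp only: parseval_disc[OF ser] disc_moment[OF s])
  also have "\<dots> = (\<Sum>k. ennreal pi * ennreal ((cmod (a k))^2 * cmom s k))"
    using cmom_pos[of s, THEN less_imp_le] by (intro suminf_cong) (simp add: ennreal_mult mult_ac)
  also have "\<dots> = ennreal pi * (\<Sum>k. ennreal ((cmod (a k))^2 * cmom s k))"
    by (rule ennreal_suminf_cmult)
  finally show ?thesis .
qed

definition Pk :: "complex \<Rightarrow> complex \<Rightarrow> real" where
  "Pk z \<zeta> = (1 - (cmod z)^2) / (cmod (z - \<zeta>))^2"

lemma key_zeta:
  fixes g :: "complex \<Rightarrow> complex" and \<zeta> :: complex and m :: nat
  assumes hol: "g holomorphic_on ball 0 1" and \<zeta>: "cmod \<zeta> = 1"
  shows "(\<integral>\<^sup>+z. ennreal ((cmod (g z))^2 * Pk z \<zeta> * (1 - (cmod z)^2)^m) * indicator (ball 0 1) z \<partial>lborel)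
   \<le> 6 * (ennreal (pi * (cmod (g 0))^2) +
       (\<integral>\<^sup>+z. ennreal ((cmod (deriv g z))^2 * Pk z \<zeta> * (1 - (cmod z)^2)^m) * indicator (ball 0 1) z \<partial>lborel))"
proof -
  define b where "b = (\<lambda>k. (deriv ^^ k) g 0 / fact k)"
  define e where "e = (\<lambda>k. of_nat (k+1) * b (k+1))"
  define \<alpha> where "\<alpha> = (\<lambda>i. b i * \<zeta> ^ i)"
  have holD: "deriv g holomorphic_on ball 0 1" by (rule holomorphic_deriv[OF hol open_ball])
  have serg: "(\<lambda>k. b k * z^k) sums g z" if "z \<in> ball 0 1" for z
    using holomorphic_power_series[OF hol that] by (simp add: b_def)
  have serd: "(\<lambda>k. e k * z^k) sums deriv g z" if "z \<in> ball 0 1" for z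
  proof -
    have "(\<lambda>k. (deriv ^^ k) (deriv g) 0 / fact k * (z - 0)^k) sums deriv g z"
      by (rule holomorphic_power_series[OF holD that])
    moreover have "(deriv ^^ k) (deriv g) 0 / fact k = e k" for k
    proof -
      have "(deriv ^^ k) (deriv g) = (deriv ^^ Suc k) g" by (simp only: funpow_Suc_right o_apply)
      moreover have "(fact (Suc k) :: complex) = of_nat (k+1) * fact k" by simp
      ultimately show ?thesis unfolding e_def b_def
        by (simp del: of_nat_Suc fact_Suc add: field_simps)
    qed
    ultimately show ?thesis by simp
  qed
  define BG where "BG = (\<lambda>k. \<Sum>i\<le>k. b i * cnj \<zeta> ^ (k - i + 1))"
  define BH where "BH = (\<lambda>k. \<Sum>i\<le>k. e i * cnj \<zeta> ^ (k - i + 1))"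
  have serG: "(\<lambda>k. BG k * z^k) sums (g z / (\<zeta> - z))" if "z \<in> ball 0 1" for z
    unfolding BG_def by (rule cauchy_div[OF serg \<zeta> that])
  have serH: "(\<lambda>k. BH k * z^k) sums (deriv g z / (\<zeta> - z))" if "z \<in> ball 0 1" for z
    unfolding BH_def by (rule cauchy_div[OF serd \<zeta> that])
  have nG: "cmod (BG k) = cmod (As \<alpha> k)" for k
    unfolding BG_def cnj_shift_norm[OF \<zeta>] As_def \<alpha>_def ..
  have nH: "cmod (BH k) = cmod (Ds \<alpha> k)" for k
  proof -
    have "Ds \<alpha> k = \<zeta> * (\<Sum>i\<le>k. e i * \<zeta> ^ i)"
      unfolding Ds_def \<alpha>_def e_def by (simp add: sum_distrib_left mult_ac)
    then have "cmod (Ds \<alpha> k) = cmod (\<Sum>i\<le>k. e i * \<zeta> ^ i)" using \<zeta> by (simp add: norm_mult)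
    then show ?thesis unfolding BH_def cnj_shift_norm[OF \<zeta>] by simp
  qed
  have integrand: "ennreal ((cmod (F z))^2 * Pk z \<zeta> * (1 - (cmod z)^2)^m) * indicator (ball 0 1) z
      = ennreal ((cmod (F z / (\<zeta> - z)))^2 * (1 - (cmod z)^2)^(Suc m)) * indicator (ball 0 1) z" for F z
  proof (cases "z \<in> ball 0 1")
    case True
    then have "cmod (z - \<zeta>) = cmod (\<zeta> - z)" by (simp add: norm_minus_commute)
    then show ?thesis
      by (simp add: Pk_def norm_divide power_divide field_simps)
  qed simp
  have LHS: "(\<integral>\<^sup>+z. ennreal ((cmod (g z))^2 * Pk z \<zeta> * (1 - (cmod z)^2)^m) * indicator (ball 0 1) z \<partial>lborel)
      = ennreal pi * (\<Sum>k. ennreal ((cmod (As \<alpha> k))^2 * cmom (Suc m) k))"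
    by (simp only: integrand disc_series_moment[OF serG] nG)
  have RHS: "(\<integral>\<^sup>+z. ennreal ((cmod (deriv g z))^2 * Pk z \<zeta> * (1 - (cmod z)^2)^m) * indicator (ball 0 1) z \<partial>lborel)
      = ennreal pi * (\<Sum>k. ennreal ((cmod (Ds \<alpha> k))^2 * cmom (Suc m) k))"
    by (simp only: integrand disc_series_moment[OF serH] nH)
  have a0: "\<alpha> 0 = g 0" by (simp add: \<alpha>_def b_def)
  have "ennreal pi * (\<Sum>k. ennreal ((cmod (As \<alpha> k))^2 * cmom (Suc m) k))
      \<le> ennreal pi * (6 * (ennreal ((cmod (\<alpha> 0))^2) + (\<Sum>k. ennreal ((cmod (Ds \<alpha> k))^2 * cmom (Suc m) k))))"
    by (intro mult_left_mono discrete_main) auto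
  also have "\<dots> = 6 * (ennreal (pi * (cmod (g 0))^2) + ennreal pi * (\<Sum>k. ennreal ((cmod (Ds \<alpha> k))^2 * cmom (Suc m) k)))"
    by (simp add: a0 ennreal_mult distrib_left mult_ac)
  finally show ?thesis unfolding LHS RHS .
qed

lemma Pk_nonneg: "cmod z < 1 \<Longrightarrow> Pk z \<zeta> \<ge> 0"
  unfolding Pk_def by (intro divide_nonneg_nonneg) (auto simp: abs_square_le_1 less_imp_le)

lemma Pk_bound:
  assumes "cmod z < 1" "cmod \<zeta> = 1"
  shows "Pk z \<zeta> \<le> 1 / (1 - cmod z)^2"
proof -
  have d: "1 - cmod z \<le> cmod (z - \<zeta>)"
    using norm_triangle_ineq2[of \<zeta> z] assms by (simp add: norm_minus_commute)
  have p: "0 < 1 - cmod z" using assms by simp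
  have num: "0 \<le> 1 - (cmod z)^2" "1 - (cmod z)^2 \<le> 1" using assms by (auto simp: abs_square_le_1 less_imp_le)
  have "(1 - cmod z)^2 \<le> (cmod (z - \<zeta>))^2" using d p by (intro power_mono) auto
  then show ?thesis unfolding Pk_def using num p
    by (intro frac_le) auto
qed

lemma id_meas_mu:
  assumes sets: "sets \<mu> = sets (restrict_space borel (sphere (0::complex) 1))"
  shows "(\<lambda>x. x) \<in> \<mu> \<rightarrow>\<^sub>M borel"
proof -
  have r: "(\<lambda>x. x) \<in> restrict_space borel (sphere (0::complex) 1) \<rightarrow>\<^sub>M borel"
    by (rule measurable_restrict_space1) simp
  show ?thesis by (subst measurable_cong_sets[OF sets refl]) (rule r)
qed

lemma Pk_meas_mu:
  assumes sets: "sets \<mu> = sets (restrict_space borel (sphere (0::complex) 1))"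
  shows "(\<lambda>\<zeta>. Pk z \<zeta>) \<in> borel_measurable \<mu>"
proof -
  have [measurable]: "(\<lambda>x. x) \<in> \<mu> \<rightarrow>\<^sub>M borel" by (rule id_meas_mu[OF sets])
  show ?thesis unfolding Pk_def by measurable
qed

lemma meas_pair:
  assumes sets: "sets \<mu> = sets (restrict_space borel (sphere (0::complex) 1))"
    and [measurable]: "u \<in> borel_measurable borel"
  shows "(\<lambda>p. ennreal (u (fst p) * Pk (fst p) (snd p))) \<in> borel_measurable (lborel \<Otimes>\<^sub>M \<mu>)"
proof -
  have [measurable]: "(\<lambda>x. x) \<in> \<mu> \<rightarrow>\<^sub>M borel" by (rule id_meas_mu[OF sets])
  have [measurable]: "snd \<in> (lborel \<Otimes>\<^sub>M \<mu>) \<rightarrow>\<^sub>M borel"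
    using measurable_compose[OF measurable_snd id_meas_mu[OF sets]] by simp
  have [measurable]: "fst \<in> (lborel \<Otimes>\<^sub>M \<mu>) \<rightarrow>\<^sub>M (borel :: complex measure)"
    using measurable_fst[of lborel \<mu>] by simp
  show ?thesis unfolding Pk_def by measurable
qed

lemma poisson_ennreal:
  assumes fin: "finite_measure \<mu>" and sets: "sets \<mu> = sets (restrict_space borel (sphere (0::complex) 1))"
    and z: "cmod z < 1" and c: "c \<ge> 0"
  shows "ennreal (c * poisson_int \<mu> z) = (\<integral>\<^sup>+\<zeta>. ennreal (c * Pk z \<zeta>) \<partial>\<mu>)"
proof -
  interpret finite_measure \<mu> by (rule fin)
  have sp: "space \<mu> = sphere 0 1"
    using sets_eq_imp_space_eq[OF sets] by (simp add: space_restrict_space)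
  have meas: "(\<lambda>\<zeta>. Pk z \<zeta>) \<in> borel_measurable \<mu>" by (rule Pk_meas_mu[OF sets])
  have int: "integrable \<mu> (\<lambda>\<zeta>. Pk z \<zeta>)"
  proof (rule integrable_const_bound[where B="1 / (1 - cmod z)^2"])
    show "AE \<zeta> in \<mu>. norm (Pk z \<zeta>) \<le> 1 / (1 - cmod z)^2"
      using Pk_bound[OF z] Pk_nonneg[OF z] by (intro AE_I2) (auto simp: sp)
  qed (rule meas)
  have pe: "poisson_int \<mu> z = (\<integral>\<zeta>. Pk z \<zeta> \<partial>\<mu>)"
    by (simp add: poisson_int_def Pk_def)
  have "ennreal (poisson_int \<mu> z) = (\<integral>\<^sup>+\<zeta>. ennreal (Pk z \<zeta>) \<partial>\<mu>)"
    unfolding pe using int Pk_nonneg[OF z]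
    by (intro nn_integral_eq_integral[symmetric]) auto
  then have "ennreal c * ennreal (poisson_int \<mu> z) = (\<integral>\<^sup>+\<zeta>. ennreal c * ennreal (Pk z \<zeta>) \<partial>\<mu>)"
  proof -
    have em: "(\<lambda>\<zeta>. ennreal (Pk z \<zeta>)) \<in> borel_measurable \<mu>" using meas by measurable
    show ?thesis using nn_integral_cmult[OF em, of "ennreal c"] \<open>ennreal (poisson_int \<mu> z) = _\<close> by simp
  qed
  then show ?thesis using c Pk_nonneg[OF z]
    by (simp add: ennreal_mult[symmetric] poisson_int_def Pk_def integral_nonneg_AE)
qed

lemma area_int_finite_iff:
  "area_int F < \<infinity> \<longleftrightarrow> (\<integral>\<^sup>+ z. ennreal (F z) * indicator (ball 0 1) z \<partial>lborel) < \<infinity>"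
proof -
  define X where "X = (\<integral>\<^sup>+ z. ennreal (F z) * indicator (ball 0 1) z \<partial>lborel)"
  have p0: "ennreal pi \<noteq> 0" using pi_gt_zero by simp
  have "(X / ennreal pi = top) \<longleftrightarrow> X = top"
    using p0 by (simp add: ennreal_divide_eq_top_iff)
  then show ?thesis unfolding area_int_def X_def[symmetric] by (simp add: less_top[symmetric])
qed

lemma swap_mu:
  assumes fin: "finite_measure \<mu>" and sets: "sets \<mu> = sets (restrict_space borel (sphere (0::complex) 1))"
    and hol: "g holomorphic_on ball 0 1"
  shows "(\<integral>\<^sup>+z. ennreal ((cmod (g z))^2 * poisson_int \<mu> z * (1 - (cmod z)^2)^m) * indicator (ball 0 1) z \<partial>lborel)
   = (\<integral>\<^sup>+\<zeta>. (\<integral>\<^sup>+z. ennreal ((cmod (g z))^2 * Pk z \<zeta> * (1 - (cmod z)^2)^m) * indicator (ball 0 1) z \<partial>lborel) \<partial>\<mu>)"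
proof -
  define u where "u = (\<lambda>z. indicator (ball 0 1) z * ((cmod (g z))^2 * (1 - (cmod z)^2)^m))"
  have um: "u \<in> borel_measurable borel"
  proof -
    have "continuous_on (ball 0 1) (\<lambda>z. (cmod (g z))^2 * (1 - (cmod z)^2)^m)"
      using holomorphic_on_imp_continuous_on[OF hol] by (intro continuous_intros) auto
    moreover have "ball (0::complex) 1 \<in> sets borel" by simp
    ultimately have "(\<lambda>x. indicator (ball 0 1) x *\<^sub>R ((cmod (g x))^2 * (1 - (cmod x)^2)^m)) \<in> borel_measurable borel"
      using borel_measurable_continuous_on_indicator by blast
    then
    show ?thesis by (simp add: u_def)
  qed
  have ps: "pair_sigma_finite lborel \<mu>"
    unfolding pair_sigma_finite_def using fin
    by (auto intro: lborel.sigma_finite_measure_axioms simp: finite_measure_def)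
  have p1: "ennreal ((cmod (g z))^2 * poisson_int \<mu> z * (1 - (cmod z)^2)^m) * indicator (ball 0 1) z
      = (\<integral>\<^sup>+\<zeta>. ennreal (u z * Pk z \<zeta>) \<partial>\<mu>)" for z
  proof (cases "z \<in> ball 0 1")
    case True
    have c: "0 \<le> (cmod (g z))^2 * (1 - (cmod z)^2)^m"
      using True by (auto intro!: mult_nonneg_nonneg zero_le_power simp: abs_square_le_1 less_imp_le)
    have "ennreal ((cmod (g z))^2 * poisson_int \<mu> z * (1 - (cmod z)^2)^m)
        = ennreal (((cmod (g z))^2 * (1 - (cmod z)^2)^m) * poisson_int \<mu> z)" by (simp add: mult_ac)
    also have "\<dots> = (\<integral>\<^sup>+\<zeta>. ennreal (((cmod (g z))^2 * (1 - (cmod z)^2)^m) * Pk z \<zeta>) \<partial>\<mu>)"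
      by (rule poisson_ennreal[OF fin sets _ c]) (use True in simp)
    finally show ?thesis using True by (simp add: u_def)
  next
    case False
    then show ?thesis by (simp add: u_def)
  qed
  have p2: "ennreal ((cmod (g z))^2 * Pk z \<zeta> * (1 - (cmod z)^2)^m) * indicator (ball 0 1) z
      = ennreal (u z * Pk z \<zeta>)" for z \<zeta>
    by (cases "z \<in> ball 0 1") (simp_all add: u_def mult_ac)
  have "(\<integral>\<^sup>+z. ennreal ((cmod (g z))^2 * poisson_int \<mu> z * (1 - (cmod z)^2)^m) * indicator (ball 0 1) z \<partial>lborel)
      = (\<integral>\<^sup>+z. (\<integral>\<^sup>+\<zeta>. ennreal (u z * Pk z \<zeta>) \<partial>\<mu>) \<partial>lborel)"
    by (simp only: p1)
  also have "\<dots> = (\<integral>\<^sup>+\<zeta>. (\<integral>\<^sup>+z. ennreal (u z * Pk z \<zeta>) \<partial>lborel) \<partial>\<mu>)"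
  proof (rule pair_sigma_finite.Fubini'[OF ps, symmetric])
    have "(\<lambda>(x, y). ennreal (u x * Pk x y)) = (\<lambda>p. ennreal (u (fst p) * Pk (fst p) (snd p)))"
      by auto
    then show "(\<lambda>(x, y). ennreal (u x * Pk x y)) \<in> borel_measurable (lborel \<Otimes>\<^sub>M \<mu>)"
      using meas_pair[OF sets um] by simp
  qed
  also have "\<dots> = (\<integral>\<^sup>+\<zeta>. (\<integral>\<^sup>+z. ennreal ((cmod (g z))^2 * Pk z \<zeta> * (1 - (cmod z)^2)^m) * indicator (ball 0 1) z \<partial>lborel) \<partial>\<mu>)"
    by (simp only: p2)
  finally show ?thesis .
qed

lemma R_meas:
  assumes sets: "sets \<mu> = sets (restrict_space borel (sphere (0::complex) 1))"
    and um: "u \<in> borel_measurable borel"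
  shows "(\<lambda>\<zeta>. \<integral>\<^sup>+z. ennreal (u z * Pk z \<zeta>) \<partial>lborel) \<in> borel_measurable \<mu>"
proof (rule lborel.borel_measurable_nn_integral)
  have "(\<lambda>(x, y). (\<lambda>p. ennreal (u (fst p) * Pk (fst p) (snd p))) (y, x)) \<in> borel_measurable (\<mu> \<Otimes>\<^sub>M lborel)"
    by (rule measurable_pair_swap[OF meas_pair[OF sets um]])
  moreover have "(\<lambda>(x, y). (\<lambda>p. ennreal (u (fst p) * Pk (fst p) (snd p))) (y, x)) = (\<lambda>(\<zeta>, z). ennreal (u z * Pk z \<zeta>))"
    by auto
  ultimately show "(\<lambda>(\<zeta>, z). ennreal (u z * Pk z \<zeta>)) \<in> borel_measurable (\<mu> \<Otimes>\<^sub>M lborel)" by simp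
qed

lemma ug_meas:
  assumes hol: "g holomorphic_on ball 0 1"
  shows "(\<lambda>z. indicator (ball 0 1) z * ((cmod (g z))^2 * (1 - (cmod z)^2)^m)) \<in> borel_measurable borel"
proof -
  have "continuous_on (ball 0 1) (\<lambda>z. (cmod (g z))^2 * (1 - (cmod z)^2)^m)"
    using holomorphic_on_imp_continuous_on[OF hol] by (intro continuous_intros) auto
  moreover have "ball (0::complex) 1 \<in> sets borel" by simp
  ultimately have "(\<lambda>x. indicator (ball 0 1) x *\<^sub>R ((cmod (g x))^2 * (1 - (cmod x)^2)^m)) \<in> borel_measurable borel"
    using borel_measurable_continuous_on_indicator by blast
  then show ?thesis by simp
qed

lemma ug_eq:
  "ennreal ((cmod (g z))^2 * Pk z \<zeta> * (1 - (cmod z)^2)^m) * indicator (ball 0 1) z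
      = ennreal ((indicator (ball 0 1) z * ((cmod (g z))^2 * (1 - (cmod z)^2)^m)) * Pk z \<zeta>)"
  by (cases "z \<in> ball 0 1") (simp_all add: mult_ac)

lemma mu_step:
  assumes fin: "finite_measure \<mu>" and sets: "sets \<mu> = sets (restrict_space borel (sphere (0::complex) 1))"
    and hol: "g holomorphic_on ball 0 1"
    and fd: "area_int (\<lambda>z. (cmod (deriv g z))^2 * poisson_int \<mu> z * (1 - (cmod z)^2)^m) < \<infinity>"
  shows "area_int (\<lambda>z. (cmod (g z))^2 * poisson_int \<mu> z * (1 - (cmod z)^2)^m) < \<infinity>"
proof -
  interpret finite_measure \<mu> by (rule fin)
  have holD: "deriv g holomorphic_on ball 0 1" by (rule holomorphic_deriv[OF hol open_ball])
  have sp: "space \<mu> = sphere 0 1"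
    using sets_eq_imp_space_eq[OF sets] by (simp add: space_restrict_space)
  define R where "R = (\<lambda>\<zeta>. (\<integral>\<^sup>+z. ennreal ((cmod (deriv g z))^2 * Pk z \<zeta> * (1 - (cmod z)^2)^m) * indicator (ball 0 1) z \<partial>lborel))"
  have Rfin: "(\<integral>\<^sup>+\<zeta>. R \<zeta> \<partial>\<mu>) < \<infinity>"
    using fd unfolding area_int_finite_iff R_def swap_mu[OF fin sets holD] .
  have Rm: "R \<in> borel_measurable \<mu>"
    unfolding R_def ug_eq by (rule R_meas[OF sets ug_meas[OF holD]])
  have "(\<integral>\<^sup>+z. ennreal ((cmod (g z))^2 * poisson_int \<mu> z * (1 - (cmod z)^2)^m) * indicator (ball 0 1) z \<partial>lborel)
      = (\<integral>\<^sup>+\<zeta>. (\<integral>\<^sup>+z. ennreal ((cmod (g z))^2 * Pk z \<zeta> * (1 - (cmod z)^2)^m) * indicator (ball 0 1) z \<partial>lborel) \<partial>\<mu>)"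
    by (rule swap_mu[OF fin sets hol])
  also have "\<dots> \<le> (\<integral>\<^sup>+\<zeta>. 6 * (ennreal (pi * (cmod (g 0))^2) + R \<zeta>) \<partial>\<mu>)"
    unfolding R_def by (intro nn_integral_mono key_zeta[OF hol]) (simp add: sp)
  also have "\<dots> = 6 * ((\<integral>\<^sup>+\<zeta>. ennreal (pi * (cmod (g 0))^2) \<partial>\<mu>) + (\<integral>\<^sup>+\<zeta>. R \<zeta> \<partial>\<mu>))"
    using Rm by (simp add: nn_integral_cmult nn_integral_add mult.assoc)
  also have "\<dots> < \<infinity>"
  proof -
    have "emeasure \<mu> (space \<mu>) \<noteq> top" by (rule emeasure_finite)
    then show ?thesis using Rfin by (simp add: ennreal_mult_eq_top_iff less_top[symmetric])
  qed
  finally show ?thesis unfolding area_int_finite_iff .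
qed

theorem lemma3p1:
  fixes \<mu> :: "complex measure" and n j :: nat and f :: "complex \<Rightarrow> complex"
  assumes "finite_measure \<mu>"
    and "sets \<mu> = sets (restrict_space borel (sphere 0 1))"
    and "emeasure \<mu> (space \<mu>) \<noteq> 0"
    and "n \<ge> 1"
    and "f \<in> H_mu \<mu> n"
    and "j \<le> n"
  shows "area_int (\<lambda>z. (cmod ((deriv ^^ j) f z))\<^sup>2 * poisson_int \<mu> z * (1 - (cmod z)\<^sup>2) ^ (n - 1)) < \<infinity>"
proof -
  note fin = assms(1) and sets = assms(2)
  define A where "A = (\<lambda>i. area_int (\<lambda>z. (cmod ((deriv ^^ i) f z))\<^sup>2 * poisson_int \<mu> z * (1 - (cmod z)\<^sup>2) ^ (n - 1)))"
  have hol: "f holomorphic_on ball 0 1" and D: "D_mu \<mu> n f < \<infinity>"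
    using assms(5) by (auto simp: H_mu_def)
  have An: "A n < \<infinity>"
  proof -
    have "ennreal (1 / (fact n * fact (n - 1))) * A n < \<infinity>"
      using D by (simp add: D_mu_def A_def)
    moreover have "ennreal (1 / (fact n * fact (n - 1))) \<noteq> 0" by simp
    ultimately show ?thesis
      by (auto simp: ennreal_mult_less_top)
  qed
  have step: "A (Suc i) < \<infinity> \<Longrightarrow> A i < \<infinity>" for i
  proof -
    assume a: "A (Suc i) < \<infinity>"
    have holi: "(deriv ^^ i) f holomorphic_on ball 0 1"
      by (rule holomorphic_higher_deriv[OF hol open_ball])
    have "deriv ((deriv ^^ i) f) = (deriv ^^ Suc i) f" by simp
    then show ?thesis
      using mu_step[OF fin sets holi, of "n - 1"] a unfolding A_def by simp
  qed
  have "\<forall>k. k \<le> n \<longrightarrow> A (n - k) < \<infinity>"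
  proof (intro allI)
    fix k show "k \<le> n \<longrightarrow> A (n - k) < \<infinity>"
    proof (induction k)
      case 0 then show ?case using An by simp
    next
      case (Suc k)
      show ?case
      proof
        assume k: "Suc k \<le> n"
        then have "A (n - k) < \<infinity>" using Suc.IH by simp
        moreover have "n - k = Suc (n - Suc k)" using k by simp
        ultimately show "A (n - Suc k) < \<infinity>" using step by metis
      qed
    qed
  qed
  then have "A (n - (n - j)) < \<infinity>" by simp
  then show ?thesis using assms(6) by (simp add: A_def)
qed

end
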